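(* If $a\in\mathcal{A}(D_n)$ satisfies $f'_{r,P,Q}(a)=0$ for all $P,Q\in\mathbb{N}_0^n$, then $a=0$.
   Context: Fix $n\ge1$; $|P|=\sum P_i$. $D_n=Z/U(1)$, $Z=\{r\in\mathbb{C}^{1+n}:-|r^0|^2+\sum_{i\ge1}|r^i|^2=-1\}$. $\hat D_n=\hat Z/\mathbb{C}^*$, $\hat Z=\{(p,q)\in\mathbb{C}^{1+n}\times\mathbb{C}^{1+n}:-p^0q^0+\sum_{i\ge1}p^iq^i=-1\}$, $z\cdot(p,q)=(zp,q/z)$; $\Delta_D([r])=[r,\bar r]$. $\mathcal{A}(D_n)=\{\hat a\circ\Delta_D:\hat a\in\mathcal{O}(\hat D_n)\}$, $\hat a$ uniquely determined by $a$. $P$-chart: on $\{[p,q]\in\hat D_n:q^0\neq0\}$, $\hat\phi^P([p,q])=(p^1q^0,\dots,p^nq^0,q^1/q^0,\dots,q^n/q^0)$; $Q$-chart: on $\{[p,q]:p^0\neq0\}$, $\hat\phi^Q([p,q])=(p^1/p^0,\dots,p^n/p^0,p^0q^1,\dots,p^0q^n)$; both are biholomorphic onto $\mathbb{C}^n\times\mathbb{C}^n$. For $P,Q\in\mathbb{N}_0^n$, $f'_{r,P,Q}(a)$ is the coefficient of $x^Py^Q$ in the Taylor expansion at $0$ of the entire function $\hat a\circ(\hat\phi^P)^{-1}(x,y)$ if $|P|\ge|Q|$, and of $\hat a\circ(\hat\phi^Q)^{-1}(x,y)$ if $|P|<|Q|$. *)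

theory Defs
  imports "HOL-Analysis.Analysis"
begin

text \<open>Points of C^(1+n) are pairs (r0, r) with r0 the 0-th coordinate and
  r :: complex^'n the coordinates 1..n (n = CARD('n) >= 1).
  Points of C^(1+n) x C^(1+n) are pairs (p, q).\<close>

type_synonym 'n cpt = "complex \<times> (complex^'n)"
type_synonym 'n hpt = "'n cpt \<times> 'n cpt"

definition Zset :: "'n::finite cpt set" where
  "Zset = {(r0, r). (\<Sum>i\<in>UNIV. (cmod (r$i))\<^sup>2) - (cmod r0)\<^sup>2 = -1}"

definition hatZ :: "'n::finite hpt set" where
  "hatZ = {((p0, p), (q0, q)). - p0 * q0 + (\<Sum>i\<in>UNIV. p$i * q$i) = -1}"

definition cstar_act :: "complex \<Rightarrow> 'n::finite hpt \<Rightarrow> 'n hpt" where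
  "cstar_act z w = (case w of ((p0, p), (q0, q)) \<Rightarrow>
     ((z * p0, \<chi> i. z * p$i), (q0 / z, \<chi> i. q$i / z)))"

definition DeltaD :: "'n::finite cpt \<Rightarrow> 'n hpt" where
  "DeltaD r = (case r of (r0, rr) \<Rightarrow> ((r0, rr), (cnj r0, \<chi> i. cnj (rr$i))))"

definition imul :: "'n::finite hpt \<Rightarrow> 'n hpt" where
  "imul w = (case w of ((p0, p), (q0, q)) \<Rightarrow>
     ((\<i> * p0, \<chi> i. \<i> * p$i), (\<i> * q0, \<chi> i. \<i> * q$i)))"

text \<open>Holomorphic functions on hat D_n = hatZ / C^*: C^*-invariant functions on the
  complex hypersurface hatZ which are holomorphic on hatZ, i.e. locally the
  restriction of a holomorphic (complex-differentiable) function on an open subset of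
  the ambient space C^(2+2n).\<close>
definition holo_hatD :: "('n::finite hpt \<Rightarrow> complex) \<Rightarrow> bool" where
  "holo_hatD F \<longleftrightarrow>
     (\<forall>w\<in>hatZ. \<forall>z. z \<noteq> 0 \<longrightarrow> F (cstar_act z w) = F w) \<and>
     (\<forall>w\<in>hatZ. \<exists>U G G'. open U \<and> w \<in> U \<and> (\<forall>v\<in>U \<inter> hatZ. G v = F v) \<and>
        (\<forall>v\<in>U. (G has_derivative G' v) (at v) \<and>
                 (\<forall>h. G' v (imul h) = \<i> * G' v h)))"

definition chartP :: "'n::finite hpt \<Rightarrow> (complex^'n) \<times> (complex^'n)" where
  "chartP w = (case w of ((p0, p), (q0, q)) \<Rightarrow> ((\<chi> i. p$i * q0), (\<chi> i. q$i / q0)))"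

definition chartQ :: "'n::finite hpt \<Rightarrow> (complex^'n) \<times> (complex^'n)" where
  "chartQ w = (case w of ((p0, p), (q0, q)) \<Rightarrow> ((\<chi> i. p$i / p0), (\<chi> i. p0 * q$i)))"

text \<open>hat a o (hat phi^P)^(-1) and hat a o (hat phi^Q)^(-1): evaluate at any
  representative in the chart domain mapped to (x,y).\<close>
definition compP :: "('n::finite hpt \<Rightarrow> complex) \<Rightarrow> complex^'n \<Rightarrow> complex^'n \<Rightarrow> complex" where
  "compP F x y = F (SOME w. w \<in> hatZ \<and> fst (snd w) \<noteq> 0 \<and> chartP w = (x, y))"

definition compQ :: "('n::finite hpt \<Rightarrow> complex) \<Rightarrow> complex^'n \<Rightarrow> complex^'n \<Rightarrow> complex" where
  "compQ F x y = F (SOME w. w \<in> hatZ \<and> fst (fst w) \<noteq> 0 \<and> chartQ w = (x, y))"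

definition mono :: "complex^'n \<Rightarrow> ('n::finite \<Rightarrow> nat) \<Rightarrow> complex" where
  "mono x P = (\<Prod>i\<in>UNIV. (x$i) ^ P i)"

definition msize :: "('n::finite \<Rightarrow> nat) \<Rightarrow> nat" where
  "msize P = (\<Sum>i\<in>UNIV. P i)"

definition taylor_coeff ::
  "(complex^'n \<Rightarrow> complex^'n \<Rightarrow> complex) \<Rightarrow> ('n::finite \<Rightarrow> nat) \<Rightarrow> ('n \<Rightarrow> nat) \<Rightarrow> complex" where
  "taylor_coeff g = (THE c. \<exists>e>0. \<forall>x y. norm (x, y) < e \<longrightarrow>
      ((\<lambda>(P, Q). c P Q * mono x P * mono y Q) has_sum g x y) UNIV)"

definition fprime :: "('n::finite hpt \<Rightarrow> complex) \<Rightarrow> ('n \<Rightarrow> nat) \<Rightarrow> ('n \<Rightarrow> nat) \<Rightarrow> complex" where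
  "fprime F P Q = (if msize P \<ge> msize Q then taylor_coeff (compP F) P Q
                   else taylor_coeff (compQ F) P Q)"

end

theory Submission
  imports Defs "HOL-Complex_Analysis.Complex_Analysis"
begin

no_notation Formal_Power_Series.fps_nth (infixl "$" 75)

definition gam :: "real \<Rightarrow> complex" where
  "gam \<tau> = exp (2 * of_real pi * \<i> * of_real \<tau>)"

lemma gam_circ: "circlepath 0 1 = gam"
  by (simp add: circlepath gam_def fun_eq_iff)

lemma norm_gam [simp]: "norm (gam t) = 1"
  by (simp add: gam_def norm_exp_eq_Re)

lemma gam_cnj_mult [simp]: "gam t * cnj (gam t) = 1"
  by (metis complex_norm_square norm_gam of_real_1 power_one)

lemma continuous_on_gam [continuous_intros]: "continuous_on S gam"
  unfolding gam_def by (intro continuous_intros)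

lemma gam_pow_cnj: "gam \<tau> ^ a * cnj (gam \<tau>) ^ b = exp (2 * of_real pi * \<i> * of_int (int a - int b) * of_real \<tau>)"
proof -
  have "gam \<tau> ^ a = exp (of_nat a * (2 * of_real pi * \<i> * of_real \<tau>))"
    by (simp add: gam_def exp_of_nat_mult)
  moreover have "cnj (gam \<tau>) ^ b = exp (of_nat b * (- (2 * of_real pi * \<i> * of_real \<tau>)))"
    by (simp add: gam_def exp_cnj flip: exp_of_nat_mult)
  ultimately show ?thesis
    by (simp add: exp_add[symmetric] algebra_simps)
qed

lemma integral_exp_int:
  fixes k :: int
  shows "integral {0..1} (\<lambda>\<tau>. exp (2 * of_real pi * \<i> * of_int k * of_real \<tau>)) = (if k = 0 then 1 else 0)"
proof (cases "k = 0")
  case True then show ?thesis by simp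
next
  case False
  define c where "c = 2 * of_real pi * \<i> * (of_int k :: complex)"
  have c0: "c \<noteq> 0" using False by (simp add: c_def)
  have "((\<lambda>\<tau>. exp (c * of_real \<tau>)) has_integral (exp (c * of_real 1) / c - exp (c * of_real 0) / c)) {0..1}"
    apply (rule fundamental_theorem_of_calculus[where f="\<lambda>\<tau>. exp (c * of_real \<tau>) / c"])
     apply simp
    apply (rule has_vector_derivative_real_field)
    apply (rule derivative_eq_intros refl)+
    using c0 by (auto simp: divide_simps)
  moreover have "exp (c * of_real 1) = 1"
    using exp_integer_2pi[of "of_int k"] by (simp add: c_def algebra_simps)
  ultimately have "((\<lambda>\<tau>. exp (c * of_real \<tau>)) has_integral 0) {0..1}" by simp
  then show ?thesis using False by (simp add: c_def integral_unique)
qed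

lemma orth: "integral {0..1} (\<lambda>\<tau>. gam \<tau> ^ a * cnj (gam \<tau>) ^ b) = (if a = b then 1 else 0)"
  unfolding gam_pow_cnj integral_exp_int by simp

lemma integral_has_sum:
  fixes v :: "'a \<Rightarrow> real \<Rightarrow> complex"
  assumes cont: "\<And>\<alpha>. \<alpha> \<in> A \<Longrightarrow> continuous_on {0..1} (v \<alpha>)"
    and bnd: "\<And>\<alpha> \<tau>. \<alpha> \<in> A \<Longrightarrow> \<tau> \<in> {0..1} \<Longrightarrow> norm (v \<alpha> \<tau>) \<le> M \<alpha>"
    and M: "M summable_on A"
    and sum: "\<And>\<tau>. \<tau> \<in> {0..1} \<Longrightarrow> ((\<lambda>\<alpha>. v \<alpha> \<tau>) has_sum V \<tau>) A"
  shows "((\<lambda>\<alpha>. integral {0..1} (v \<alpha>)) has_sum integral {0..1} V) A"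
proof -
  have M0: "0 \<le> M \<alpha>" if "\<alpha> \<in> A" for \<alpha>
  proof -
    have "cmod (v \<alpha> 0) \<le> M \<alpha>" using bnd[OF that] by simp
    then show ?thesis using norm_ge_zero order_trans by blast
  qed
  define \<delta> where "\<delta> F = infsum M (A - F)" for F
  have key: "norm (V \<tau> - (\<Sum>\<alpha>\<in>F. v \<alpha> \<tau>)) \<le> \<delta> F"
    if F: "finite F" "F \<subseteq> A" and t: "\<tau> \<in> {0..1}" for F \<tau>
  proof -
    have s1: "((\<lambda>\<alpha>. v \<alpha> \<tau>) has_sum (V \<tau> - (\<Sum>\<alpha>\<in>F. v \<alpha> \<tau>))) (A - F)"
      by (rule has_sum_Diff[OF sum[OF t] has_sum_finite[OF F(1)] F(2)])
    have ns: "(\<lambda>\<alpha>. norm (v \<alpha> \<tau>)) summable_on (A - F)"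
      by (rule summable_on_comparison_test[where f=M])
         (use summable_on_subset_banach[OF M, of "A - F"] bnd t in auto)
    have MF: "M summable_on (A - F)"
      using summable_on_subset_banach[OF M, of "A - F"] by auto
    have "norm (V \<tau> - (\<Sum>\<alpha>\<in>F. v \<alpha> \<tau>)) = norm (infsum (\<lambda>\<alpha>. v \<alpha> \<tau>) (A - F))"
      using s1 by (simp add: infsumI)
    also have "\<dots> \<le> infsum (\<lambda>\<alpha>. norm (v \<alpha> \<tau>)) (A - F)"
      by (rule norm_infsum_bound[OF ns])
    also have "\<dots> \<le> \<delta> F"
      unfolding \<delta>_def by (rule infsum_mono[OF ns MF]) (use bnd t in auto)
    finally show ?thesis .
  qed
  have \<delta>lim: "(\<delta> \<longlongrightarrow> 0) (finite_subsets_at_top A)"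
  proof -
    have "(sum M \<longlongrightarrow> infsum M A) (finite_subsets_at_top A)"
      using M has_sum_def has_sum_infsum by blast
    then have "((\<lambda>F. infsum M A - sum M F) \<longlongrightarrow> infsum M A - infsum M A) (finite_subsets_at_top A)"
      by (intro tendsto_intros)
    moreover have "\<forall>\<^sub>F F in finite_subsets_at_top A. infsum M A - sum M F = \<delta> F"
      by (rule eventually_finite_subsets_at_top_weakI)
         (auto simp: \<delta>_def infsum_Diff M infsum_finite)
    ultimately show ?thesis by (simp add: tendsto_cong)
  qed
  have \<delta>0: "0 \<le> \<delta> F" for F
    unfolding \<delta>_def by (rule infsum_nonneg) (use M0 in auto)
  have intv: "v \<alpha> integrable_on {0..1}" if "\<alpha> \<in> A" for \<alpha>
    using cont[OF that] integrable_continuous_real by blast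
  have intsum: "(\<lambda>\<tau>. \<Sum>\<alpha>\<in>F. v \<alpha> \<tau>) integrable_on {0..1}" if "finite F" "F \<subseteq> A" for F
    using that intv by (intro integrable_sum) auto
  have intV: "V integrable_on {0..1}"
  proof -
    have "V integrable_on cbox 0 1"
    proof (rule integrable_uniform_limit)
      fix e :: real assume e: "e > 0"
      have "\<forall>\<^sub>F F in finite_subsets_at_top A. \<delta> F < e"
        using order_tendstoD(2)[OF \<delta>lim e] .
      moreover have "\<forall>\<^sub>F F in finite_subsets_at_top A. finite F \<and> F \<subseteq> A"
        by auto
      ultimately have "\<forall>\<^sub>F F in finite_subsets_at_top A. \<delta> F < e \<and> finite F \<and> F \<subseteq> A"
        by (rule eventually_conj)
      then obtain F where F: "\<delta> F < e" "finite F" "F \<subseteq> A"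
        using eventually_happens'[OF finite_subsets_at_top_neq_bot] by blast
      show "\<exists>g. (\<forall>x\<in>cbox 0 1. norm (V x - g x) \<le> e) \<and> g integrable_on cbox 0 1"
      proof (intro exI conjI ballI)
        fix x :: real assume "x \<in> cbox 0 1"
        then show "norm (V x - (\<Sum>\<alpha>\<in>F. v \<alpha> x)) \<le> e"
          using key[OF F(2,3), of x] F(1) by simp
      next
        show "(\<lambda>\<tau>. \<Sum>\<alpha>\<in>F. v \<alpha> \<tau>) integrable_on cbox 0 1"
          using intsum[OF F(2,3)] by simp
      qed
    qed
    then show ?thesis by simp
  qed
  have "((\<lambda>F. (\<Sum>\<alpha>\<in>F. integral {0..1} (v \<alpha>)) - integral {0..1} V) \<longlongrightarrow> 0) (finite_subsets_at_top A)"
  proof (rule Lim_null_comparison[OF _ \<delta>lim])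
    show "\<forall>\<^sub>F F in finite_subsets_at_top A. norm ((\<Sum>\<alpha>\<in>F. integral {0..1} (v \<alpha>)) - integral {0..1} V) \<le> \<delta> F"
    proof (rule eventually_finite_subsets_at_top_weakI)
      fix F assume F: "finite F" "F \<subseteq> A"
      have "(\<Sum>\<alpha>\<in>F. integral {0..1} (v \<alpha>)) - integral {0..1} V
            = integral {0..1} (\<lambda>\<tau>. (\<Sum>\<alpha>\<in>F. v \<alpha> \<tau>) - V \<tau>)"
        using F intv intV by (subst integral_diff) (auto simp: integral_sum[OF F(1)] intsum subset_iff)
      also have "norm \<dots> \<le> \<delta> F * Henstock_Kurzweil_Integration.content (cbox (0::real) 1)"
        apply (rule has_integral_bound[OF \<delta>0])
         apply (simp only: cbox_interval)
         apply (rule integrable_integral)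
         apply (intro integrable_diff intsum F intV)
        using key[OF F] by (simp add: norm_minus_commute)
      finally show "norm ((\<Sum>\<alpha>\<in>F. integral {0..1} (v \<alpha>)) - integral {0..1} V) \<le> \<delta> F"
        by simp
    qed
  qed
  then show ?thesis
    unfolding has_sum_def by (simp add: Lim_null[symmetric])
qed

lemma continuous_on_gam' [continuous_intros]: "continuous_on S f \<Longrightarrow> continuous_on S (\<lambda>x. gam (f x))"
  by (rule continuous_on_compose2[OF continuous_on_gam]) auto

definition upd :: "complex^'m \<Rightarrow> 'm \<Rightarrow> complex \<Rightarrow> complex^'m" where
  "upd w j z = (\<chi> i. if i = j then z else w$i)"

lemma upd_nth [simp]: "upd w j z $ i = (if i = j then z else w$i)"
  by (simp add: upd_def)

lemma upd_same [simp]: "upd w j (w$j) = w"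
  by (simp add: vec_eq_iff)

lemma continuous_on_upd [continuous_intros]:
  "continuous_on S a \<Longrightarrow> continuous_on S b \<Longrightarrow> continuous_on S (\<lambda>x. upd (a x) j (b x))"
  unfolding upd_def
  apply (intro continuous_on_vec_lambda)
  subgoal for i by (cases "i = j") (simp_all add: continuous_on_component)
  done

fun II :: "'m list \<Rightarrow> (complex^'m \<Rightarrow> complex) \<Rightarrow> complex^'m \<Rightarrow> complex" where
  "II [] \<phi> w = \<phi> w"
| "II (j # js) \<phi> w = integral {0..1} (\<lambda>\<tau>. II js \<phi> (upd w j (gam \<tau>)))"

lemma integral_cmult_c: "integral S (\<lambda>x. c * f x) = c * integral S (f :: _ \<Rightarrow> complex)"
proof (cases "c = 0")
  case True then show ?thesis by simp
next
  case False
  show ?thesis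
  proof (cases "f integrable_on S")
    case True then show ?thesis
      by (intro integral_unique has_integral_mult_right integrable_integral)
  next
    case nf: False
    have "\<not> (\<lambda>x. c * f x) integrable_on S"
      using has_integral_mult_right_iff[OF False] nf unfolding integrable_on_def by blast
    then show ?thesis using nf by (simp add: not_integrable_integral)
  qed
qed

lemma II_loc:
  assumes "\<And>i. i \<notin> set js \<Longrightarrow> w$i = w'$i"
    and "\<And>\<zeta>. (\<And>i. i \<notin> set js \<Longrightarrow> \<zeta>$i = w$i) \<Longrightarrow> \<phi> \<zeta> = \<psi> \<zeta>"
  shows "II js \<phi> w = II js \<psi> w'"
  using assms
proof (induction js arbitrary: w w')
  case Nil
  then have "w = w'" by (simp add: vec_eq_iff)
  then show ?case using Nil by simp
next
  case (Cons j js)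
  show ?case
    unfolding II.simps
  proof (rule integral_cong)
    fix \<tau> :: real
    show "II js \<phi> (upd w j (gam \<tau>)) = II js \<psi> (upd w' j (gam \<tau>))"
      by (rule Cons.IH) (use Cons.prems in auto)
  qed
qed

lemma II_cmult: "II js (\<lambda>\<zeta>. c * \<phi> \<zeta>) w = c * II js \<phi> w"
  by (induction js arbitrary: w) (simp_all add: integral_cmult_c)

lemma II_zero: "II js (\<lambda>\<zeta>. 0) w = 0"
  using II_cmult[of js 0 "\<lambda>_. 0" w] by simp

lemma II_cont:
  assumes "continuous_on UNIV \<phi>"
  shows "continuous_on UNIV (II js \<phi>)"
  using assms
proof (induction js)
  case Nil then show ?case by (simp add: fun_eq_iff[symmetric] eta_contract_eq)
next
  case (Cons j js)
  have c: "continuous_on (UNIV \<times> cbox 0 1) (\<lambda>(w, \<tau>::real). II js \<phi> (upd w j (gam \<tau>)))"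
  proof -
    have "continuous_on (UNIV \<times> cbox 0 1) (\<lambda>p::(complex^_) \<times> real. upd (fst p) j (gam (snd p)))"
      by (intro continuous_intros)
    from continuous_on_compose2[OF Cons.IH[OF Cons.prems] this]
    show ?thesis by (simp add: case_prod_unfold)
  qed
  have "continuous_on UNIV (\<lambda>w. integral (cbox 0 1) (\<lambda>\<tau>::real. II js \<phi> (upd w j (gam \<tau>))))"
    by (rule integral_continuous_on_param[OF c])
  then show ?case by (simp add: fun_eq_iff[symmetric] cbox_interval)
qed

definition tor :: "'m list \<Rightarrow> complex^'m \<Rightarrow> (complex^'m) set" where
  "tor js w = {\<zeta>. (\<forall>i\<in>set js. norm (\<zeta>$i) = 1) \<and> (\<forall>i. i \<notin> set js \<longrightarrow> \<zeta>$i = w$i)}"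

lemma tor_Nil [simp]: "tor [] w = {w}"
  by (auto simp: tor_def vec_eq_iff)

lemma tor_Cons: "\<zeta> \<in> tor js (upd w j (gam \<tau>)) \<Longrightarrow> \<zeta> \<in> tor (j # js) w"
  by (auto simp: tor_def)

lemma II_bound:
  assumes "\<And>\<zeta>. \<zeta> \<in> tor js w \<Longrightarrow> norm (\<phi> \<zeta>) \<le> B" and "0 \<le> B"
  shows "norm (II js \<phi> w) \<le> B"
  using assms(1)
proof (induction js arbitrary: w)
  case Nil then show ?case by simp
next
  case (Cons j js)
  have b: "norm (II js \<phi> (upd w j (gam \<tau>))) \<le> B" for \<tau>
    by (rule Cons.IH) (use Cons.prems tor_Cons in blast)
  show ?case
  proof (cases "(\<lambda>\<tau>. II js \<phi> (upd w j (gam \<tau>))) integrable_on cbox 0 1")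
    case True
    have "norm (integral (cbox 0 1) (\<lambda>\<tau>. II js \<phi> (upd w j (gam \<tau>)))) \<le> B * Henstock_Kurzweil_Integration.content (cbox (0::real) 1)"
      by (rule has_integral_bound[OF assms(2) integrable_integral[OF True]]) (use b in auto)
    then show ?thesis by (simp add: cbox_interval)
  next
    case False
    then show ?thesis using assms(2) by (simp add: cbox_interval not_integrable_integral)
  qed
qed

lemma II_has_sum:
  assumes cont: "\<And>\<alpha>. \<alpha> \<in> A \<Longrightarrow> continuous_on UNIV (u \<alpha>)"
    and bnd: "\<And>\<alpha> \<zeta>. \<alpha> \<in> A \<Longrightarrow> \<zeta> \<in> tor js w \<Longrightarrow> norm (u \<alpha> \<zeta>) \<le> M \<alpha>"
    and M: "M summable_on A"
    and sum: "\<And>\<zeta>. \<zeta> \<in> tor js w \<Longrightarrow> ((\<lambda>\<alpha>. u \<alpha> \<zeta>) has_sum \<phi> \<zeta>) A"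
  shows "((\<lambda>\<alpha>. II js (u \<alpha>) w) has_sum II js \<phi> w) A"
  using bnd sum
proof (induction js arbitrary: w)
  case Nil then show ?case by simp
next
  case (Cons j js)
  show ?case
    unfolding II.simps
  proof (rule integral_has_sum[where M = M])
    fix \<alpha> assume a: "\<alpha> \<in> A"
    have "continuous_on UNIV (\<lambda>\<tau>::real. II js (u \<alpha>) (upd w j (gam \<tau>)))"
      by (rule continuous_on_compose2[OF II_cont[OF cont[OF a]]]) (auto intro: continuous_intros)
    then show "continuous_on {0..1} (\<lambda>\<tau>. II js (u \<alpha>) (upd w j (gam \<tau>)))"
      by (rule continuous_on_subset) auto
  next
    fix \<alpha> \<tau> assume a: "\<alpha> \<in> A" and t: "\<tau> \<in> {0..(1::real)}"
    have M0: "0 \<le> M \<alpha>"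
    proof -
      have "upd w j (gam 0) \<in> tor (j # js) w \<or> True" by simp
      have "norm (u \<alpha> (\<chi> i. if i \<in> set (j#js) then 1 else w$i)) \<le> M \<alpha>"
        by (rule Cons.prems(1)[OF a]) (auto simp: tor_def)
      then show ?thesis using norm_ge_zero order_trans by blast
    qed
    show "norm (II js (u \<alpha>) (upd w j (gam \<tau>))) \<le> M \<alpha>"
      by (rule II_bound[OF _ M0]) (use Cons.prems(1)[OF a] tor_Cons in blast)
  next
    show "M summable_on A" by (rule M)
  next
    fix \<tau> :: real
    show "((\<lambda>\<alpha>. II js (u \<alpha>) (upd w j (gam \<tau>))) has_sum II js \<phi> (upd w j (gam \<tau>))) A"
      by (rule Cons.IH) (use Cons.prems tor_Cons in blast)+
  qed
qed

lemma II_prod: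
  assumes "distinct js"
  shows "II js (\<lambda>\<zeta>. \<Prod>i\<in>set js. g i (\<zeta>$i)) w = (\<Prod>i\<in>set js. integral {0..1} (\<lambda>\<tau>. g i (gam \<tau>)))"
  using assms
proof (induction js arbitrary: w)
  case Nil then show ?case by simp
next
  case (Cons j js)
  have jn: "j \<notin> set js" using Cons.prems by simp
  have "II (j # js) (\<lambda>\<zeta>. \<Prod>i\<in>set (j # js). g i (\<zeta>$i)) w
      = integral {0..1} (\<lambda>\<tau>. g j (gam \<tau>) * (\<Prod>i\<in>set js. integral {0..1} (\<lambda>\<tau>. g i (gam \<tau>))))"
    unfolding II.simps
  proof (rule integral_cong)
    fix \<tau>
    have "II js (\<lambda>\<zeta>. \<Prod>i\<in>set (j # js). g i (\<zeta>$i)) (upd w j (gam \<tau>))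
        = II js (\<lambda>\<zeta>. g j (gam \<tau>) * (\<Prod>i\<in>set js. g i (\<zeta>$i))) (upd w j (gam \<tau>))"
      by (rule II_loc) (use jn in auto)
    also have "\<dots> = g j (gam \<tau>) * (\<Prod>i\<in>set js. integral {0..1} (\<lambda>\<tau>. g i (gam \<tau>)))"
      using Cons.IH Cons.prems by (simp add: II_cmult)
    finally show "II js (\<lambda>\<zeta>. \<Prod>i\<in>set (j # js). g i (\<zeta>$i)) (upd w j (gam \<tau>)) = \<dots>" .
  qed
  also have "\<dots> = (\<Prod>i\<in>set (j # js). integral {0..1} (\<lambda>\<tau>. g i (gam \<tau>)))"
    using jn by (simp add: integral_cmult_c[symmetric] mult.commute)
  finally show ?case .
qed

lemma cauchy_1d:
  assumes hol: "h holomorphic_on UNIV" and a: "norm a < 1"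
  shows "h a = integral {0..1} (\<lambda>\<tau>. h (gam \<tau>) * (gam \<tau> / (gam \<tau> - a)))"
proof -
  have "((\<lambda>u. h u / (u - a)) has_contour_integral (2 * of_real pi * \<i> * h a)) (circlepath 0 1)"
    by (rule Cauchy_integral_circlepath)
       (use hol a in \<open>auto intro: holomorphic_on_imp_continuous_on holomorphic_on_subset\<close>)
  then have "((\<lambda>x. h (gam x) / (gam x - a) * vector_derivative gam (at x within {0..1}))
              has_integral (2 * of_real pi * \<i> * h a)) {0..1}"
    by (simp add: has_contour_integral_def gam_circ)
  then have i1: "((\<lambda>x. h (gam x) / (gam x - a) * (2 * of_real pi * \<i> * gam x))
              has_integral (2 * of_real pi * \<i> * h a)) {0..1}"
  proof (rule has_integral_eq[rotated])
    fix x :: real assume "x \<in> {0..1}"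
    then have "vector_derivative gam (at x within {0..1}) = 2 * of_real pi * \<i> * gam x"
      using vector_derivative_circlepath01[of x 0 1] by (simp add: gam_circ gam_def)
    then show "h (gam x) / (gam x - a) * vector_derivative gam (at x within {0..1})
             = h (gam x) / (gam x - a) * (2 * of_real pi * \<i> * gam x)" by simp
  qed
  have "((\<lambda>x. inverse (2 * of_real pi * \<i>) * (h (gam x) / (gam x - a) * (2 * of_real pi * \<i> * gam x)))
              has_integral (inverse (2 * of_real pi * \<i>) * (2 * of_real pi * \<i> * h a))) {0..1}"
    by (rule has_integral_mult_right[OF i1])
  then have "((\<lambda>x. h (gam x) * (gam x / (gam x - a))) has_integral h a) {0..1}"
    by (simp add: field_simps)
  then show ?thesis by (simp add: integral_unique)
qed

definition lst :: "'m::finite list" where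
  "lst = (SOME js. distinct js \<and> set js = UNIV)"

lemma lst: "distinct (lst :: 'm::finite list)" "set (lst :: 'm list) = UNIV"
proof -
  have "\<exists>js::'m list. distinct js \<and> set js = UNIV"
    using finite_distinct_list[of "UNIV::'m set"] by auto
  then have "distinct (lst :: 'm list) \<and> set (lst :: 'm list) = UNIV"
    unfolding lst_def by (rule someI_ex)
  then show "distinct (lst :: 'm::finite list)" "set (lst :: 'm list) = UNIV" by auto
qed

definition sc :: "complex \<Rightarrow> complex^'m \<Rightarrow> complex^'m" where
  "sc c x = (\<chi> i. c * x$i)"

lemma sc_nth [simp]: "sc c x $ i = c * x$i"
  by (simp add: sc_def)

lemma continuous_on_sc [continuous_intros]: "continuous_on S f \<Longrightarrow> continuous_on S (\<lambda>x. sc c (f x))"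
  unfolding sc_def by (intro continuous_intros)

lemma mono_sc: "mono (sc c x) P = c ^ msize P * mono x P"
  by (simp add: mono_def msize_def power_mult_distrib prod.distrib power_sum)

lemma has_sum_prod_UNIV:
  fixes g :: "'i::finite \<Rightarrow> nat \<Rightarrow> 'c::{real_normed_field,banach,second_countable_topology}"
  assumes "\<And>i. (\<lambda>k. norm (g i k)) summable_on UNIV"
  shows "((\<lambda>\<alpha>. \<Prod>i\<in>UNIV. g i (\<alpha> i)) has_sum (\<Prod>i\<in>UNIV. infsum (g i) UNIV)) UNIV"
proof -
  have P: "PiE UNIV (\<lambda>_. UNIV) = (UNIV :: ('i \<Rightarrow> nat) set)"
    by (simp add: PiE_UNIV_domain)
  have a: "Infinite_Set_Sum.abs_summable_on (g i) UNIV" for i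
    using abs_summable_equivalent assms by blast
  have "Infinite_Set_Sum.abs_summable_on (\<lambda>\<alpha>. \<Prod>i\<in>UNIV. g i (\<alpha> i)) (PiE UNIV (\<lambda>_. UNIV))"
    by (rule abs_summable_on_prod_PiE) (use a in auto)
  then have s: "(\<lambda>\<alpha>. \<Prod>i\<in>UNIV. g i (\<alpha> i)) summable_on UNIV"
    unfolding P using abs_summable_equivalent abs_summable_summable by blast
  have "infsum (\<lambda>\<alpha>. \<Prod>i\<in>UNIV. g i (\<alpha> i)) (PiE UNIV (\<lambda>_. UNIV)) = (\<Prod>i\<in>UNIV. infsum (g i) UNIV)"
    by (rule infsum_prod_PiE_abs) (use assms in auto)
  then have e: "infsum (\<lambda>\<alpha>. \<Prod>i\<in>UNIV. g i (\<alpha> i)) UNIV = (\<Prod>i\<in>UNIV. infsum (g i) UNIV)"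
    by (simp only: P)
  show ?thesis using has_sum_infsum[OF s] unfolding e .
qed

lemma geom_norm_summable: "norm (x::'a::{real_normed_field,banach}) < 1 \<Longrightarrow> (\<lambda>k. norm (x ^ k)) summable_on UNIV"
proof -
  assume x: "norm x < 1"
  have "summable (\<lambda>k. norm x ^ k)" by (rule summable_geometric) (use x in simp)
  then have "((\<lambda>k. norm x ^ k) has_sum (\<Sum>k. norm x ^ k)) UNIV"
    by (intro norm_summable_imp_has_sum) (auto simp: summable_sums)
  then have "(\<lambda>k. norm x ^ k) summable_on UNIV" unfolding summable_on_def by blast
  then show ?thesis by (simp add: norm_power)
qed

lemma kernel_has_sum:
  assumes "norm \<zeta> = 1" "norm (z::complex) < 1"
  shows "((\<lambda>k. (z * cnj \<zeta>) ^ k) has_sum \<zeta> / (\<zeta> - z)) UNIV"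
proof -
  have n: "norm (z * cnj \<zeta>) < 1" using assms by (simp add: norm_mult)
  have sm: "summable (\<lambda>k. norm ((z * cnj \<zeta>) ^ k))"
    using summable_geometric[of "norm (z * cnj \<zeta>)"] n by (simp add: norm_power)
  have "((\<lambda>k. (z * cnj \<zeta>) ^ k) has_sum 1 / (1 - z * cnj \<zeta>)) UNIV"
    by (rule norm_summable_imp_has_sum[OF sm geometric_sums[OF n]])
  moreover have "1 / (1 - z * cnj \<zeta>) = \<zeta> / (\<zeta> - z)"
  proof -
    have c: "\<zeta> * cnj \<zeta> = 1" using assms(1) by (metis complex_norm_square of_real_1 power_one)
    have "\<zeta> - z \<noteq> 0" using assms by auto
    moreover have "1 - z * cnj \<zeta> \<noteq> 0" using n by auto
    moreover have "\<zeta> * (1 - z * cnj \<zeta>) = \<zeta> - z" using c by (simp add: algebra_simps)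
    ultimately show ?thesis by (simp add: field_simps)
  qed
  ultimately show ?thesis by simp
qed

lemma cauchy_poly:
  fixes f :: "complex^'m \<Rightarrow> complex"
  assumes hol: "\<And>w j. (\<lambda>\<zeta>. f (upd w j \<zeta>)) holomorphic_on UNIV"
    and "distinct js" and "\<And>i. i \<in> set js \<Longrightarrow> norm (z$i) < 1"
  shows "f z = II js (\<lambda>\<zeta>. f \<zeta> * (\<Prod>i\<in>set js. \<zeta>$i / (\<zeta>$i - z$i))) z"
  using assms(2,3)
proof (induction js arbitrary: z)
  case Nil then show ?case by simp
next
  case (Cons j js)
  have jn: "j \<notin> set js" and dj: "distinct js" using Cons.prems by auto
  have nz: "norm (z$i) < 1" if "i \<in> set (j # js)" for i using Cons.prems(2)[OF that] .
  have "f z = f (upd z j (z$j))" by simp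
  also have "\<dots> = integral {0..1} (\<lambda>\<tau>. f (upd z j (gam \<tau>)) * (gam \<tau> / (gam \<tau> - z$j)))"
    by (rule cauchy_1d[OF hol nz]) simp
  also have "\<dots> = II (j # js) (\<lambda>\<zeta>. f \<zeta> * (\<Prod>i\<in>set (j # js). \<zeta>$i / (\<zeta>$i - z$i))) z"
    unfolding II.simps
  proof (rule integral_cong)
    fix \<tau>
    define z' where "z' = upd z j (gam \<tau>)"
    have zz: "z'$i = z$i" if "i \<in> set js" for i using that jn by (auto simp: z'_def)
    have nz': "norm (z'$i) < 1" if "i \<in> set js" for i
      using nz[of i] zz[OF that] that by simp
    have "f z' = II js (\<lambda>\<zeta>. f \<zeta> * (\<Prod>i\<in>set js. \<zeta>$i / (\<zeta>$i - z'$i))) z'"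
      by (rule Cons.IH[OF dj nz'])
    then have "f z' * (gam \<tau> / (gam \<tau> - z$j))
        = II js (\<lambda>\<zeta>. (gam \<tau> / (gam \<tau> - z$j)) * (f \<zeta> * (\<Prod>i\<in>set js. \<zeta>$i / (\<zeta>$i - z'$i)))) z'"
      unfolding II_cmult by (simp only: mult.commute)
    also have "\<dots> = II js (\<lambda>\<zeta>. f \<zeta> * (\<Prod>i\<in>set (j # js). \<zeta>$i / (\<zeta>$i - z$i))) z'"
    proof (rule II_loc)
      fix \<zeta> :: "complex^'m" assume a: "\<And>i. i \<notin> set js \<Longrightarrow> \<zeta>$i = z'$i"
      have zj: "\<zeta>$j = gam \<tau>" using a[of j] jn by (simp add: z'_def)
      have pc: "(\<Prod>i\<in>set js. \<zeta>$i / (\<zeta>$i - z'$i)) = (\<Prod>i\<in>set js. \<zeta>$i / (\<zeta>$i - z$i))"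
        by (rule prod.cong) (simp_all add: zz)
      have pi: "(\<Prod>i\<in>set (j # js). \<zeta>$i / (\<zeta>$i - z$i)) = \<zeta>$j / (\<zeta>$j - z$j) * (\<Prod>i\<in>set js. \<zeta>$i / (\<zeta>$i - z$i))"
        using jn by (simp only: set_simps prod.insert[OF finite_set jn])
      show "gam \<tau> / (gam \<tau> - z$j) * (f \<zeta> * (\<Prod>i\<in>set js. \<zeta>$i / (\<zeta>$i - z'$i)))
          = f \<zeta> * (\<Prod>i\<in>set (j # js). \<zeta>$i / (\<zeta>$i - z$i))"
        unfolding pi pc zj by (rule mult.left_commute)
    next
      fix i show "z'$i = z'$i" by (rule refl)
    qed
    finally show "f (upd z j (gam \<tau>)) * (gam \<tau> / (gam \<tau> - z$j))
        = II js (\<lambda>\<zeta>. f \<zeta> * (\<Prod>i\<in>set (j # js). \<zeta>$i / (\<zeta>$i - z$i))) (upd z j (gam \<tau>))"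
      unfolding z'_def .
  qed
  finally show ?case .
qed

lemma has_sum_diff':
  fixes f g :: "'a \<Rightarrow> 'b::topological_ab_group_add"
  assumes "(f has_sum a) A" "(g has_sum b) A"
  shows "((\<lambda>x. f x - g x) has_sum (a - b)) A"
proof -
  have "((\<lambda>x. - g x) has_sum (- b)) A" using assms(2) by (simp add: has_sum_uminus)
  from has_sum_add[OF assms(1) this] show ?thesis by simp
qed

definition cc :: "(complex^'m::finite \<Rightarrow> complex) \<Rightarrow> ('m \<Rightarrow> nat) \<Rightarrow> complex" where
  "cc f \<alpha> = II lst (\<lambda>\<zeta>. f \<zeta> * (\<Prod>i\<in>UNIV. cnj (\<zeta>$i) ^ \<alpha> i)) 0"

lemma tor_lst: "tor lst w = {\<zeta>. \<forall>i. norm (\<zeta>$i) = 1}"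
  by (auto simp: tor_def lst)

lemma norm_le_card:
  fixes \<zeta> :: "complex^'m::finite"
  assumes "\<forall>i. norm (\<zeta>$i) = 1"
  shows "norm \<zeta> \<le> real CARD('m)"
proof -
  have "norm \<zeta> \<le> (\<Sum>i\<in>UNIV. norm (\<zeta>$i))"
    unfolding norm_vec_def by (rule L2_set_le_sum) simp
  then show ?thesis using assms by simp
qed

lemma bounded_on_torus:
  fixes f :: "complex^'m::finite \<Rightarrow> complex"
  assumes "continuous_on UNIV f"
  obtains K where "K \<ge> 0" "\<And>\<zeta>. \<forall>i. norm (\<zeta>$i) = 1 \<Longrightarrow> norm (f \<zeta>) \<le> K"
proof -
  have "compact (f ` cball 0 (real CARD('m)))"
    by (rule compact_continuous_image[OF continuous_on_subset[OF assms subset_UNIV] compact_cball])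
  then have "bounded (f ` cball 0 (real CARD('m)))" by (rule compact_imp_bounded)
  then obtain b where b: "b > 0" "\<And>x. x \<in> cball 0 (real CARD('m)) \<Longrightarrow> norm (f x) \<le> b"
    unfolding bounded_pos by auto
  show ?thesis
  proof (rule that[of b])
    show "b \<ge> 0" using b by simp
    fix \<zeta> :: "complex^'m" assume "\<forall>i. norm (\<zeta>$i) = 1"
    then have "\<zeta> \<in> cball 0 (real CARD('m))" using norm_le_card by auto
    then show "norm (f \<zeta>) \<le> b" by (rule b)
  qed
qed

lemma local_expansion:
  fixes f :: "complex^'m::finite \<Rightarrow> complex"
  assumes cont: "continuous_on UNIV f" and hol: "\<And>w j. (\<lambda>\<zeta>. f (upd w j \<zeta>)) holomorphic_on UNIV"
    and z: "\<And>i. norm (z$i) < 1"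
  shows "((\<lambda>\<alpha>. cc f \<alpha> * mono z \<alpha>) has_sum f z) UNIV"
proof -
  obtain K where K0: "K \<ge> 0" and K: "\<And>\<zeta>. \<forall>i. norm (\<zeta>$i) = 1 \<Longrightarrow> norm (f \<zeta>) \<le> K"
    using bounded_on_torus[OF cont] by blast
  define \<phi> where "\<phi> \<zeta> = f \<zeta> * (\<Prod>i\<in>UNIV. \<zeta>$i / (\<zeta>$i - z$i))" for \<zeta>
  define u where "u \<alpha> \<zeta> = mono z \<alpha> * (f \<zeta> * (\<Prod>i\<in>UNIV. cnj (\<zeta>$i) ^ \<alpha> i))" for \<alpha> \<zeta>
  define M where "M \<alpha> = K * (\<Prod>i\<in>UNIV. norm (z$i) ^ \<alpha> i)" for \<alpha>
  have fz: "f z = II lst \<phi> z"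
    using cauchy_poly[OF hol lst(1), of z] z unfolding \<phi>_def lst(2) by simp
  have hs: "((\<lambda>\<alpha>. II lst (u \<alpha>) z) has_sum II lst \<phi> z) UNIV"
  proof (rule II_has_sum[where M=M])
    fix \<alpha> show "continuous_on UNIV (u \<alpha>)" unfolding u_def by (intro continuous_intros cont)
  next
    fix \<alpha> \<zeta> assume "\<zeta> \<in> tor lst z"
    then have t: "\<forall>i. norm (\<zeta>$i) = 1" by (simp add: tor_lst)
    have "norm (u \<alpha> \<zeta>) = (\<Prod>i\<in>UNIV. norm (z$i) ^ \<alpha> i) * norm (f \<zeta>)"
      using t by (simp add: u_def mono_def norm_mult prod_norm[symmetric] norm_power)
    also have "\<dots> \<le> (\<Prod>i\<in>UNIV. norm (z$i) ^ \<alpha> i) * K"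
      by (rule mult_left_mono[OF K[OF t]]) (simp add: prod_nonneg)
    also have "\<dots> = M \<alpha>" unfolding M_def by (rule mult.commute)
    finally show "norm (u \<alpha> \<zeta>) \<le> M \<alpha>" .
  next
    have "((\<lambda>\<alpha>. \<Prod>i\<in>UNIV. norm (z$i) ^ \<alpha> i) has_sum (\<Prod>i\<in>UNIV. infsum (\<lambda>k. norm (z$i) ^ k) UNIV)) UNIV"
    proof (rule has_sum_prod_UNIV)
      fix i show "(\<lambda>k. norm (norm (z$i) ^ k)) summable_on UNIV"
        by (rule geom_norm_summable) (simp add: z)
    qed
    then have "(\<lambda>\<alpha>. \<Prod>i\<in>UNIV. norm (z$i) ^ \<alpha> i) summable_on UNIV" unfolding summable_on_def by blast
    then show "M summable_on UNIV" unfolding M_def by (rule summable_on_cmult_right)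
  next
    fix \<zeta> assume "\<zeta> \<in> tor lst z"
    then have t: "\<forall>i. norm (\<zeta>$i) = 1" by (simp add: tor_lst)
    have k: "((\<lambda>k. (z$i * cnj (\<zeta>$i)) ^ k) has_sum \<zeta>$i / (\<zeta>$i - z$i)) UNIV" for i
      by (rule kernel_has_sum) (use t z in auto)
    have "((\<lambda>\<alpha>. \<Prod>i\<in>UNIV. (z$i * cnj (\<zeta>$i)) ^ \<alpha> i) has_sum (\<Prod>i\<in>UNIV. infsum (\<lambda>k. (z$i * cnj (\<zeta>$i)) ^ k) UNIV)) UNIV"
    proof (rule has_sum_prod_UNIV)
      fix i show "(\<lambda>k. norm ((z$i * cnj (\<zeta>$i)) ^ k)) summable_on UNIV"
        by (rule geom_norm_summable) (use t z in \<open>simp add: norm_mult\<close>)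
    qed
    moreover have "infsum (\<lambda>k. (z$i * cnj (\<zeta>$i)) ^ k) UNIV = \<zeta>$i / (\<zeta>$i - z$i)" for i
      using k[of i] by (rule infsumI)
    ultimately have p: "((\<lambda>\<alpha>. \<Prod>i\<in>UNIV. (z$i * cnj (\<zeta>$i)) ^ \<alpha> i) has_sum (\<Prod>i\<in>UNIV. \<zeta>$i / (\<zeta>$i - z$i))) UNIV"
      by simp
    have "((\<lambda>\<alpha>. f \<zeta> * (\<Prod>i\<in>UNIV. (z$i * cnj (\<zeta>$i)) ^ \<alpha> i)) has_sum \<phi> \<zeta>) UNIV"
      unfolding \<phi>_def by (rule has_sum_cmult_right[OF p])
    moreover have "f \<zeta> * (\<Prod>i\<in>UNIV. (z$i * cnj (\<zeta>$i)) ^ \<alpha> i) = u \<alpha> \<zeta>" for \<alpha>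
    proof -
      have "(\<Prod>i\<in>UNIV. (z$i * cnj (\<zeta>$i)) ^ \<alpha> i) = mono z \<alpha> * (\<Prod>i\<in>UNIV. cnj (\<zeta>$i) ^ \<alpha> i)"
        unfolding mono_def power_mult_distrib by (rule prod.distrib)
      then show ?thesis unfolding u_def by (simp only: mult.left_commute)
    qed
    ultimately show "((\<lambda>\<alpha>. u \<alpha> \<zeta>) has_sum \<phi> \<zeta>) UNIV" by simp
  qed
  have "II lst (u \<alpha>) z = mono z \<alpha> * cc f \<alpha>" for \<alpha>
    unfolding u_def II_cmult cc_def
    by (rule arg_cong[where f="(*) (mono z \<alpha>)"], rule II_loc) (auto simp: lst)
  then show ?thesis using hs fz by (simp add: mult.commute)
qed

lemma prod_indicator_eq:
  "(\<Prod>i\<in>(UNIV::'m::finite set). if (\<beta>::'m \<Rightarrow> nat) i = \<alpha> i then (1::complex) else 0) = (if \<beta> = \<alpha> then 1 else 0)"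
proof (cases "\<beta> = \<alpha>")
  case True then show ?thesis by simp
next
  case False
  then obtain i where "\<beta> i \<noteq> \<alpha> i" by auto
  then have "(\<Prod>i\<in>(UNIV::'m set). if \<beta> i = \<alpha> i then (1::complex) else 0) = 0"
    by (intro prod_zero) auto
  then show ?thesis using False by simp
qed

lemma II_orth:
  "II (lst :: 'm::finite list) (\<lambda>\<zeta>. mono \<zeta> \<beta> * (\<Prod>i\<in>UNIV. cnj (\<zeta>$i) ^ \<alpha> i)) w = (if \<beta> = \<alpha> then 1 else 0)"
proof -
  have "(\<lambda>\<zeta>::complex^'m. mono \<zeta> \<beta> * (\<Prod>i\<in>UNIV. cnj (\<zeta>$i) ^ \<alpha> i))
      = (\<lambda>\<zeta>. \<Prod>i\<in>set lst. (\<lambda>i x. x ^ \<beta> i * cnj x ^ \<alpha> i) i (\<zeta>$i))"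
    unfolding lst(2) mono_def by (simp add: prod.distrib)
  then have "II (lst :: 'm list) (\<lambda>\<zeta>. mono \<zeta> \<beta> * (\<Prod>i\<in>UNIV. cnj (\<zeta>$i) ^ \<alpha> i)) w
      = (\<Prod>i\<in>set lst. integral {0..1} (\<lambda>\<tau>. gam \<tau> ^ \<beta> i * cnj (gam \<tau>) ^ \<alpha> i))"
    using II_prod[OF lst(1)] by simp
  also have "\<dots> = (\<Prod>i\<in>UNIV. if \<beta> i = \<alpha> i then (1::complex) else 0)"
    unfolding lst(2) orth by simp
  finally show ?thesis by (simp only: prod_indicator_eq)
qed

lemma expansion_unique:
  fixes c c' :: "('m::finite \<Rightarrow> nat) \<Rightarrow> complex"
  assumes e: "e > 0" and e': "e' > 0"
    and h1: "\<And>z. (\<And>i. norm (z$i) < e) \<Longrightarrow> ((\<lambda>\<alpha>. c \<alpha> * mono z \<alpha>) has_sum f z) UNIV"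
    and h2: "\<And>z. (\<And>i. norm (z$i) < e') \<Longrightarrow> ((\<lambda>\<alpha>. c' \<alpha> * mono z \<alpha>) has_sum f z) UNIV"
  shows "c = c'"
proof
  fix \<alpha>
  define r where "r = min e e' / 2"
  have r: "r > 0" "r < e" "r < e'" using e e' by (auto simp: r_def)
  define rc where "rc = complex_of_real r"
  have rc0: "rc \<noteq> 0" using r by (simp add: rc_def)
  define d where "d \<beta> = c \<beta> - c' \<beta>" for \<beta>
  have hd: "((\<lambda>\<beta>. d \<beta> * rc ^ msize \<beta> * mono \<zeta> \<beta>) has_sum 0) UNIV"
    if t: "\<forall>i. norm (\<zeta>$i) = 1" for \<zeta> :: "complex^'m"
  proof -
    have n1: "norm (sc rc \<zeta> $ i) < e" and n2: "norm (sc rc \<zeta> $ i) < e'" for i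
      using t r by (auto simp: norm_mult rc_def)
    have "((\<lambda>\<beta>. c \<beta> * mono (sc rc \<zeta>) \<beta> - c' \<beta> * mono (sc rc \<zeta>) \<beta>) has_sum (f (sc rc \<zeta>) - f (sc rc \<zeta>))) UNIV"
      by (rule has_sum_diff'[OF h1[OF n1] h2[OF n2]])
    moreover have "c \<beta> * mono (sc rc \<zeta>) \<beta> - c' \<beta> * mono (sc rc \<zeta>) \<beta> = d \<beta> * rc ^ msize \<beta> * mono \<zeta> \<beta>" for \<beta>
      unfolding mono_sc d_def by (simp add: algebra_simps)
    ultimately show ?thesis by simp
  qed
  define one :: "complex^'m" where "one = (\<chi> i. 1)"
  have mono_one: "mono one \<beta> = 1" for \<beta> by (simp add: one_def mono_def)
  have "((\<lambda>\<beta>. d \<beta> * rc ^ msize \<beta> * mono one \<beta>) has_sum 0) UNIV"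
    by (rule hd) (simp add: one_def)
  then have "((\<lambda>\<beta>. d \<beta> * rc ^ msize \<beta>) has_sum 0) UNIV" by (simp add: mono_one)
  then have "(\<lambda>\<beta>. d \<beta> * rc ^ msize \<beta>) summable_on UNIV"
    unfolding summable_on_def by blast
  then have "(\<lambda>\<beta>. norm (d \<beta> * rc ^ msize \<beta>)) summable_on UNIV"
    by (rule summable_on_iff_abs_summable_on_complex[THEN iffD1])
  then have sumM: "(\<lambda>\<beta>. norm (d \<beta>) * r ^ msize \<beta>) summable_on UNIV"
    using r by (simp add: norm_mult norm_power rc_def)
  define u where "u \<beta> \<zeta> = d \<beta> * rc ^ msize \<beta> * (mono \<zeta> \<beta> * (\<Prod>i\<in>UNIV. cnj (\<zeta>$i) ^ \<alpha> i))" for \<beta> \<zeta>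
  have hs: "((\<lambda>\<beta>. II lst (u \<beta>) one) has_sum II lst (\<lambda>_. 0) one) UNIV"
  proof (rule II_has_sum[where M = "\<lambda>\<beta>. norm (d \<beta>) * r ^ msize \<beta>"])
    fix \<beta> show "continuous_on UNIV (u \<beta>)"
      unfolding u_def mono_def by (intro continuous_intros)
  next
    fix \<beta> \<zeta> assume "\<zeta> \<in> tor lst one"
    then have t: "\<forall>i. norm (\<zeta>$i) = 1" by (simp add: tor_lst)
    have "norm (u \<beta> \<zeta>) = norm (d \<beta>) * r ^ msize \<beta>"
      using t r by (simp add: u_def mono_def norm_mult prod_norm[symmetric] norm_power rc_def)
    then show "norm (u \<beta> \<zeta>) \<le> norm (d \<beta>) * r ^ msize \<beta>" by simp
  next
    show "(\<lambda>\<beta>. norm (d \<beta>) * r ^ msize \<beta>) summable_on UNIV" by (rule sumM)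
  next
    fix \<zeta> assume "\<zeta> \<in> tor lst one"
    then have t: "\<forall>i. norm (\<zeta>$i) = 1" by (simp add: tor_lst)
    have "((\<lambda>\<beta>. d \<beta> * rc ^ msize \<beta> * mono \<zeta> \<beta> * (\<Prod>i\<in>UNIV. cnj (\<zeta>$i) ^ \<alpha> i)) has_sum 0 * (\<Prod>i\<in>UNIV. cnj (\<zeta>$i) ^ \<alpha> i)) UNIV"
      by (rule has_sum_cmult_left[OF hd[OF t]])
    then show "((\<lambda>\<beta>. u \<beta> \<zeta>) has_sum 0) UNIV"
      unfolding u_def by (simp only: mult.assoc mult_zero_left)
  qed
  have "II lst (u \<beta>) one = (if \<beta> = \<alpha> then d \<alpha> * rc ^ msize \<alpha> else 0)" for \<beta>
    unfolding u_def II_cmult II_orth by simp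
  then have "((\<lambda>\<beta>. if \<beta> = \<alpha> then d \<alpha> * rc ^ msize \<alpha> else 0) has_sum 0) UNIV"
    using hs unfolding II_zero by simp
  moreover have "((\<lambda>\<beta>. if \<beta> = \<alpha> then d \<alpha> * rc ^ msize \<alpha> else 0) has_sum d \<alpha> * rc ^ msize \<alpha>) UNIV"
    by (rule has_sum_finite_neutralI[of "{\<alpha>}"]) auto
  ultimately have "d \<alpha> * rc ^ msize \<alpha> = 0" using has_sum_unique by blast
  then show "c \<alpha> = c' \<alpha>" using rc0 by (simp add: d_def)
qed

lemma global_expansion:
  fixes f :: "complex^'m::finite \<Rightarrow> complex"
  assumes cont: "continuous_on UNIV f" and hol: "\<And>w j. (\<lambda>\<zeta>. f (upd w j \<zeta>)) holomorphic_on UNIV"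
  shows "((\<lambda>\<alpha>. cc f \<alpha> * mono z \<alpha>) has_sum f z) UNIV"
proof -
  define R where "R = 1 + (\<Sum>i\<in>UNIV. norm (z$i))"
  have R0: "R > 0" unfolding R_def by (smt (verit) sum_nonneg norm_ge_zero)
  have Rz: "norm (z$i) < R" for i
  proof -
    have "norm (z$i) \<le> (\<Sum>i\<in>UNIV. norm (z$i))" by (rule member_le_sum) auto
    then show ?thesis unfolding R_def by simp
  qed
  define Rc where "Rc = complex_of_real R"
  have Rc0: "Rc \<noteq> 0" using R0 by (simp add: Rc_def)
  define fR where "fR w = f (sc Rc w)" for w
  have contR: "continuous_on UNIV fR"
    unfolding fR_def by (rule continuous_on_compose2[OF cont]) (auto intro: continuous_intros)
  have holR: "(\<lambda>\<zeta>. fR (upd w j \<zeta>)) holomorphic_on UNIV" for w j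
  proof -
    have sub: "sc Rc (upd w j x) = upd (sc Rc w) j (Rc * x)" for x
      by (simp add: vec_eq_iff)
    have e: "(\<lambda>\<zeta>. fR (upd w j \<zeta>)) = (\<lambda>\<zeta>. f (upd (sc Rc w) j \<zeta>)) \<circ> (\<lambda>\<zeta>. Rc * \<zeta>)"
      by (simp add: fR_def fun_eq_iff sub)
    show ?thesis unfolding e
      by (rule holomorphic_on_compose) (auto intro: holomorphic_intros holomorphic_on_subset[OF hol])
  qed
  define c2 where "c2 \<alpha> = cc fR \<alpha> / Rc ^ msize \<alpha>" for \<alpha>
  have h2: "((\<lambda>\<alpha>. c2 \<alpha> * mono v \<alpha>) has_sum f v) UNIV" if v: "\<And>i. norm (v$i) < R" for v
  proof -
    define w where "w = sc (1 / Rc) v"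
    have wn: "norm (w$i) < 1" for i
      using v[of i] R0 by (simp add: w_def norm_mult Rc_def norm_divide field_simps)
    have "((\<lambda>\<alpha>. cc fR \<alpha> * mono w \<alpha>) has_sum fR w) UNIV"
      by (rule local_expansion[OF contR holR wn])
    moreover have "sc Rc (sc (1 / Rc) v) = v" using Rc0 by (simp add: vec_eq_iff)
    then have "fR w = f v" by (simp add: fR_def w_def)
    moreover have "cc fR \<alpha> * mono w \<alpha> = c2 \<alpha> * mono v \<alpha>" for \<alpha>
      using Rc0 by (simp add: c2_def w_def mono_sc power_divide)
    ultimately show ?thesis by simp
  qed
  have h1: "((\<lambda>\<alpha>. cc f \<alpha> * mono v \<alpha>) has_sum f v) UNIV" if "\<And>i. norm (v$i) < 1" for v
    by (rule local_expansion[OF cont hol that])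
  have "c2 = cc f" by (rule expansion_unique[OF R0 zero_less_one h2 h1])
  then show ?thesis using h2[OF Rz] by simp
qed

definition smulH :: "complex \<Rightarrow> 'n::finite hpt \<Rightarrow> 'n hpt" where
  "smulH c w = (case w of ((p0, p), (q0, q)) \<Rightarrow> ((c * p0, sc c p), (c * q0, sc c q)))"

lemma smulH_simp [simp]: "smulH c ((p0, p), (q0, q)) = ((c * p0, sc c p), (c * q0, sc c q))"
  by (simp add: smulH_def)

lemma imul_smulH: "imul w = smulH \<i> w"
  by (cases w) (auto simp: imul_def sc_def)

lemma cdecomp: "h * z = of_real (Re h) * z + of_real (Im h) * (\<i> * z)"
  by (simp add: complex_eq_iff algebra_simps)

lemma cdec2: "h * z = Re h *\<^sub>R z + Im h *\<^sub>R (\<i> * z)"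
  by (simp add: complex_eq_iff)

lemma smulH_decomp: "smulH h B = Re h *\<^sub>R B + Im h *\<^sub>R smulH \<i> B"
proof -
  obtain p0 p q0 q where B: "B = ((p0, p), (q0, q))" by (metis prod.collapse)
  show ?thesis unfolding B
    by (simp add: vec_eq_iff sc_def cdec2[of h])
qed

lemma linear_smulH: "linear (\<lambda>h. smulH h B)"
proof -
  obtain p0 p q0 q where B: "B = ((p0, p), (q0, q))" by (metis prod.collapse)
  show ?thesis unfolding B
    apply (rule linearI)
    apply (simp add: vec_eq_iff sc_def algebra_simps)
    apply (simp add: vec_eq_iff sc_def)
    done
qed

lemma holo_affine:
  fixes F :: "'n::finite hpt \<Rightarrow> complex"
  assumes holo: "holo_hatD F" and L: "\<And>\<zeta>. L \<zeta> = A + smulH \<zeta> B" and LZ: "\<And>\<zeta>. L \<zeta> \<in> hatZ"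
  shows "(\<lambda>\<zeta>. F (L \<zeta>)) holomorphic_on UNIV"
proof -
  have bl: "bounded_linear (\<lambda>h. smulH h B)"
    using linear_smulH linear_conv_bounded_linear by blast
  have dL: "(L has_derivative (\<lambda>h. smulH h B)) (at \<zeta>0)" for \<zeta>0
  proof -
    have "((\<lambda>\<zeta>. A + smulH \<zeta> B) has_derivative (\<lambda>h. 0 + smulH h B)) (at \<zeta>0)"
      by (intro has_derivative_add has_derivative_const bounded_linear_imp_has_derivative bl)
    moreover have "L = (\<lambda>\<zeta>. A + smulH \<zeta> B)" using L by (simp add: fun_eq_iff)
    ultimately show ?thesis by simp
  qed
  have contL: "continuous (at x) L" for x
    using has_derivative_continuous[OF dL[of x]] .
  have "\<exists>d. DERIV (\<lambda>\<zeta>. F (L \<zeta>)) \<zeta>0 :> d" for \<zeta>0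
  proof -
    have H: "\<forall>w\<in>hatZ. \<exists>U G G'. open U \<and> w \<in> U \<and> (\<forall>v\<in>U \<inter> hatZ. G v = F v) \<and>
        (\<forall>v\<in>U. (G has_derivative G' v) (at v) \<and> (\<forall>h. G' v (imul h) = \<i> * G' v h))"
      using holo unfolding holo_hatD_def by (rule conjunct2)
    obtain U G G' where U: "open U" "L \<zeta>0 \<in> U" and GF: "\<forall>v\<in>U \<inter> hatZ. G v = F v"
      and GD: "\<forall>v\<in>U. (G has_derivative G' v) (at v) \<and> (\<forall>h. G' v (imul h) = \<i> * G' v h)"
      using H[rule_format, OF LZ[of \<zeta>0]] by (elim exE conjE)
    define v where "v = L \<zeta>0"
    have dG: "(G has_derivative G' v) (at (L \<zeta>0))" using GD U(2) by (simp add: v_def)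
    have Gi: "G' v (imul h) = \<i> * G' v h" for h using GD U(2) unfolding v_def by blast
    have chain: "((G \<circ> L) has_derivative (G' v \<circ> (\<lambda>h. smulH h B))) (at \<zeta>0)"
      by (rule diff_chain_at[OF dL dG])
    have "bounded_linear (G' v)" by (rule has_derivative_bounded_linear[OF dG])
    then have lin: "linear (G' v)" by (rule bounded_linear.linear)
    have eq: "G' v (smulH h B) = G' v B * h" for h
    proof -
      have "G' v (smulH h B) = G' v (Re h *\<^sub>R B + Im h *\<^sub>R imul B)"
        by (simp only: smulH_decomp[of h B] imul_smulH)
      also have "\<dots> = Re h *\<^sub>R G' v B + Im h *\<^sub>R G' v (imul B)"
        using lin by (simp add: linear_add linear_scale)
      also have "\<dots> = G' v B * h"
        by (simp add: Gi scaleR_conv_of_real) (simp add: cdecomp[of h "G' v B"] algebra_simps)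
      finally show ?thesis .
    qed
    have "((\<lambda>\<zeta>. G (L \<zeta>)) has_field_derivative G' v B) (at \<zeta>0)"
      unfolding has_field_derivative_def using chain eq by (simp add: o_def)
    moreover have "open (L -` U)"
      by (rule continuous_open_vimage[OF U(1) contL])
    moreover have "\<zeta>0 \<in> L -` U" using U by simp
    moreover have "G (L \<zeta>) = F (L \<zeta>)" if "\<zeta> \<in> L -` U" for \<zeta>
    proof -
      have "L \<zeta> \<in> U \<inter> hatZ" using that LZ[of \<zeta>] by simp
      then show ?thesis using GF by blast
    qed
    ultimately have "((\<lambda>\<zeta>. F (L \<zeta>)) has_field_derivative G' v B) (at \<zeta>0)"
      by (rule has_field_derivative_transform_within_open)
    then show ?thesis by blast
  qed
  then show ?thesis using holomorphic_on_open[OF open_UNIV] by blast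
qed

lemma holo_cont:
  fixes F :: "'n::finite hpt \<Rightarrow> complex"
  assumes holo: "holo_hatD F"
  shows "continuous_on hatZ F"
  unfolding continuous_on_eq_continuous_within
proof
  fix w :: "'n hpt" assume w: "w \<in> hatZ"
  have H: "\<forall>w\<in>hatZ. \<exists>U G G'. open U \<and> w \<in> U \<and> (\<forall>v\<in>U \<inter> hatZ. G v = F v) \<and>
      (\<forall>v\<in>U. (G has_derivative G' v) (at v) \<and> (\<forall>h. G' v (imul h) = \<i> * G' v h))"
    using holo unfolding holo_hatD_def by (rule conjunct2)
  obtain U G G' where U: "open U" "w \<in> U" and GF: "\<forall>v\<in>U \<inter> hatZ. G v = F v"
    and GD0: "\<forall>v\<in>U. (G has_derivative G' v) (at v) \<and> (\<forall>h. G' v (imul h) = \<i> * G' v h)"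
    using H[rule_format, OF w] by (elim exE conjE)
  have GD: "\<forall>v\<in>U. (G has_derivative G' v) (at v)" using GD0 by blast
  have "continuous (at w) G" using GD U(2) has_derivative_continuous by blast
  then have c: "continuous (at w within hatZ) G" using continuous_at_imp_continuous_within by blast
  obtain d where d: "d > 0" "ball w d \<subseteq> U" using U open_contains_ball by blast
  show "continuous (at w within hatZ) F"
  proof (rule continuous_transform_within[OF c d(1) w])
    fix x assume "x \<in> hatZ" "dist x w < d"
    then show "G x = F x" using GF d(2) by (auto simp: dist_commute)
  qed
qed

lemma cstar_inv: "holo_hatD F \<Longrightarrow> w \<in> hatZ \<Longrightarrow> z \<noteq> 0 \<Longrightarrow> F (cstar_act z w) = F w"
proof -
  assume h: "holo_hatD F" and w: "w \<in> hatZ" and z: "z \<noteq> 0"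
  have "\<forall>w\<in>hatZ. \<forall>z. z \<noteq> 0 \<longrightarrow> F (cstar_act z w) = F w"
    using h unfolding holo_hatD_def by (rule conjunct1)
  then show ?thesis using w z by blast
qed
definition dotc :: "complex^'n \<Rightarrow> complex^'n \<Rightarrow> complex" where
  "dotc x y = (\<Sum>i\<in>UNIV. x$i * y$i)"

definition PhiP :: "complex^'n \<Rightarrow> complex^'n \<Rightarrow> 'n::finite hpt" where
  "PhiP x y = ((1 + dotc x y, x), (1, y))"

definition PhiQ :: "complex^'n \<Rightarrow> complex^'n \<Rightarrow> 'n::finite hpt" where
  "PhiQ x y = ((1, x), (1 + dotc x y, y))"

lemma hatZ_eq: "((p0, p), (q0, q)) \<in> hatZ \<longleftrightarrow> p0 * q0 = 1 + (\<Sum>i\<in>UNIV. p$i * q$i)"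
proof -
  have "((p0, p), (q0, q)) \<in> hatZ \<longleftrightarrow> - p0 * q0 + (\<Sum>i\<in>UNIV. p$i * q$i) = -1"
    by (simp add: hatZ_def)
  also have "\<dots> \<longleftrightarrow> p0 * q0 = 1 + (\<Sum>i\<in>UNIV. p$i * q$i)"
    by (auto simp: algebra_simps)
  finally show ?thesis .
qed
lemma PhiP_in: "PhiP x y \<in> hatZ"
  apply (simp add: PhiP_def)
  apply (simp add: hatZ_eq)
  apply (simp add: dotc_def)
  done

lemma PhiQ_in: "PhiQ x y \<in> hatZ"
  apply (simp add: PhiQ_def)
  apply (simp add: hatZ_eq)
  apply (simp add: dotc_def)
  done

lemma F_via_P:
  assumes holo: "holo_hatD F" and w: "w \<in> hatZ" and q0: "fst (snd w) \<noteq> 0"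
  shows "F w = F (PhiP (fst (chartP w)) (snd (chartP w)))"
    and "1 + dotc (fst (chartP w)) (snd (chartP w)) = fst (fst w) * fst (snd w)"
proof -
  obtain p0 p q0 q where W: "w = ((p0, p), (q0, q))" by (metis prod.collapse)
  have q: "q0 \<noteq> 0" using q0 W by simp
  have e: "p0 * q0 = 1 + (\<Sum>i\<in>UNIV. p$i * q$i)" using w W hatZ_eq by blast
  have d: "dotc (\<chi> i. p$i * q0) (\<chi> i. q$i / q0) = (\<Sum>i\<in>UNIV. p$i * q$i)"
    unfolding dotc_def using q by (intro sum.cong) auto
  show "1 + dotc (fst (chartP w)) (snd (chartP w)) = fst (fst w) * fst (snd w)"
    using d e by (simp add: W chartP_def)
  have "cstar_act q0 w = PhiP (fst (chartP w)) (snd (chartP w))"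
    using d e q by (simp add: W chartP_def cstar_act_def PhiP_def vec_eq_iff mult.commute)
  then show "F w = F (PhiP (fst (chartP w)) (snd (chartP w)))"
    using cstar_inv[OF holo w q] by simp
qed

lemma F_via_Q:
  assumes holo: "holo_hatD F" and w: "w \<in> hatZ" and p0: "fst (fst w) \<noteq> 0"
  shows "F w = F (PhiQ (fst (chartQ w)) (snd (chartQ w)))"
proof -
  obtain p0 p q0 q where W: "w = ((p0, p), (q0, q))" by (metis prod.collapse)
  have p: "p0 \<noteq> 0" using p0 W by simp
  have e: "p0 * q0 = 1 + (\<Sum>i\<in>UNIV. p$i * q$i)" using w W hatZ_eq by blast
  have d: "dotc (\<chi> i. p$i / p0) (\<chi> i. p0 * q$i) = (\<Sum>i\<in>UNIV. p$i * q$i)"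
    unfolding dotc_def using p by (intro sum.cong) auto
  have "cstar_act (1 / p0) w = PhiQ (fst (chartQ w)) (snd (chartQ w))"
    using d e p by (simp add: W chartQ_def cstar_act_def PhiQ_def vec_eq_iff mult.commute)
  moreover have "F (cstar_act (1 / p0) w) = F w" by (rule cstar_inv[OF holo w]) (simp add: p)
  ultimately show ?thesis by simp
qed

lemma compP_eq:
  assumes holo: "holo_hatD F"
  shows "compP F x y = F (PhiP x y)"
proof -
  define w where "w = (SOME w. w \<in> hatZ \<and> fst (snd w) \<noteq> 0 \<and> chartP w = (x, y))"
  have ex: "PhiP x y \<in> hatZ \<and> fst (snd (PhiP x y)) \<noteq> 0 \<and> chartP (PhiP x y) = (x, y)"
    by (intro conjI PhiP_in) (simp_all add: PhiP_def chartP_def vec_eq_iff)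
  have "w \<in> hatZ \<and> fst (snd w) \<noteq> 0 \<and> chartP w = (x, y)"
    unfolding w_def by (rule someI[of _ "PhiP x y"]) (rule ex)
  then have wz: "w \<in> hatZ" and w0: "fst (snd w) \<noteq> 0" and wc: "chartP w = (x, y)" by auto
  have "F w = F (PhiP (fst (chartP w)) (snd (chartP w)))" by (rule F_via_P(1)[OF holo wz w0])
  then have "F w = F (PhiP x y)" using wc by simp
  then show ?thesis by (simp add: compP_def w_def)
qed

lemma compQ_eq:
  assumes holo: "holo_hatD F"
  shows "compQ F x y = F (PhiQ x y)"
proof -
  define w where "w = (SOME w. w \<in> hatZ \<and> fst (fst w) \<noteq> 0 \<and> chartQ w = (x, y))"
  have ex: "PhiQ x y \<in> hatZ \<and> fst (fst (PhiQ x y)) \<noteq> 0 \<and> chartQ (PhiQ x y) = (x, y)"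
    by (intro conjI PhiQ_in) (simp_all add: PhiQ_def chartQ_def vec_eq_iff)
  have "w \<in> hatZ \<and> fst (fst w) \<noteq> 0 \<and> chartQ w = (x, y)"
    unfolding w_def by (rule someI[of _ "PhiQ x y"]) (rule ex)
  then have wz: "w \<in> hatZ" and w0: "fst (fst w) \<noteq> 0" and wc: "chartQ w = (x, y)" by auto
  have "F w = F (PhiQ (fst (chartQ w)) (snd (chartQ w)))" by (rule F_via_Q[OF holo wz w0])
  then have "F w = F (PhiQ x y)" using wc by simp
  then show ?thesis by (simp add: compQ_def w_def)
qed

lemma dotc_sc: "dotc (sc a x) (sc b y) = a * b * dotc x y"
  by (simp add: dotc_def sum_distrib_left algebra_simps)

lemma weight_identity:
  assumes holo: "holo_hatD F" and s: "s = 1 + dotc x y" "s \<noteq> 0" and t: "t * t' = 1"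
  shows "F (PhiP (sc t x) (sc t' y)) = F (PhiQ (sc t (sc (1/s) x)) (sc t' (sc s y)))"
proof -
  have d1: "dotc (sc t x) (sc t' y) = dotc x y" using t by (simp add: dotc_sc)
  have d2: "dotc (sc t (sc (1/s) x)) (sc t' (sc s y)) = dotc x y"
    using t s by (simp add: dotc_sc)
  have "cstar_act s (PhiQ (sc t (sc (1/s) x)) (sc t' (sc s y))) = PhiP (sc t x) (sc t' y)"
    unfolding PhiQ_def PhiP_def d1 d2 using s by (simp add: cstar_act_def vec_eq_iff)
  moreover have "F (cstar_act s (PhiQ (sc t (sc (1/s) x)) (sc t' (sc s y)))) = F (PhiQ (sc t (sc (1/s) x)) (sc t' (sc s y)))"
    by (rule cstar_inv[OF holo PhiQ_in s(2)])
  ultimately show ?thesis by simp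
qed

definition lft :: "complex^('n + 'n) \<Rightarrow> complex^'n" where
  "lft z = (\<chi> i. z$Inl i)"

definition rgt :: "complex^('n + 'n) \<Rightarrow> complex^'n" where
  "rgt z = (\<chi> i. z$Inr i)"

definition join :: "complex^'n \<Rightarrow> complex^'n \<Rightarrow> complex^('n + 'n)" where
  "join x y = (\<chi> k. case k of Inl i \<Rightarrow> x$i | Inr i \<Rightarrow> y$i)"

lemma lft_join [simp]: "lft (join x y) = x" by (simp add: lft_def join_def vec_eq_iff)
lemma rgt_join [simp]: "rgt (join x y) = y" by (simp add: rgt_def join_def vec_eq_iff)
lemma join_lr [simp]: "join (lft z) (rgt z) = z"
  by (auto simp: lft_def rgt_def join_def vec_eq_iff split: sum.splits)

lemma lft_upd_l [simp]: "lft (upd w (Inl k) \<zeta>) = upd (lft w) k \<zeta>" by (simp add: lft_def vec_eq_iff)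
lemma rgt_upd_l [simp]: "rgt (upd w (Inl k) \<zeta>) = rgt w" by (simp add: rgt_def vec_eq_iff)
lemma lft_upd_r [simp]: "lft (upd w (Inr k) \<zeta>) = lft w" by (simp add: lft_def vec_eq_iff)
lemma rgt_upd_r [simp]: "rgt (upd w (Inr k) \<zeta>) = upd (rgt w) k \<zeta>" by (simp add: rgt_def vec_eq_iff)

lemma continuous_on_lft [continuous_intros]: "continuous_on S f \<Longrightarrow> continuous_on S (\<lambda>x. lft (f x))"
  unfolding lft_def by (intro continuous_intros)
lemma continuous_on_rgt [continuous_intros]: "continuous_on S f \<Longrightarrow> continuous_on S (\<lambda>x. rgt (f x))"
  unfolding rgt_def by (intro continuous_intros)
lemma continuous_on_join [continuous_intros]:
  "continuous_on S f \<Longrightarrow> continuous_on S g \<Longrightarrow> continuous_on S (\<lambda>x. join (f x) (g x))"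
  unfolding join_def
  apply (intro continuous_on_vec_lambda)
  subgoal for k by (cases k) (simp_all add: continuous_on_component)
  done

lemma mono_join: "mono (join x y) \<alpha> = mono x (\<alpha> \<circ> Inl) * mono y (\<alpha> \<circ> Inr)"
proof -
  have "mono (join x y) \<alpha> = (\<Prod>k\<in>UNIV <+> UNIV. join x y $ k ^ \<alpha> k)"
    by (simp add: mono_def)
  also have "\<dots> = mono x (\<alpha> \<circ> Inl) * mono y (\<alpha> \<circ> Inr)"
    by (subst prod.Plus) (auto simp: mono_def join_def o_def)
  finally show ?thesis .
qed

lemma bij_split: "bij_betw (\<lambda>(P, Q). case_sum P Q) UNIV (UNIV :: ('n + 'n \<Rightarrow> 'a) set)"
proof (rule bij_betwI[where g = "\<lambda>\<alpha>. (\<alpha> \<circ> Inl, \<alpha> \<circ> Inr)"])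
  show "(\<lambda>(P, Q). case_sum P Q) \<in> UNIV \<rightarrow> (UNIV :: ('n + 'n \<Rightarrow> 'a) set)" by simp
  show "(\<lambda>\<alpha>. (\<alpha> \<circ> Inl, \<alpha> \<circ> Inr)) \<in> (UNIV :: ('n + 'n \<Rightarrow> 'a) set) \<rightarrow> UNIV" by simp
  fix x :: "('n \<Rightarrow> 'a) \<times> ('n \<Rightarrow> 'a)"
  show "(\<lambda>\<alpha>. (\<alpha> \<circ> Inl, \<alpha> \<circ> Inr)) ((\<lambda>(P, Q). case_sum P Q) x) = x"
    by (cases x) (simp add: o_def)
next
  fix \<alpha> :: "'n + 'n \<Rightarrow> 'a"
  show "(\<lambda>(P, Q). case_sum P Q) ((\<lambda>\<alpha>. (\<alpha> \<circ> Inl, \<alpha> \<circ> Inr)) \<alpha>) = \<alpha>"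
    by (auto simp: fun_eq_iff split: sum.splits)
qed

lemma bij_split': "bij_betw (\<lambda>\<alpha>. (\<alpha> \<circ> Inl, \<alpha> \<circ> Inr)) (UNIV :: ('n + 'n \<Rightarrow> 'a) set) UNIV"
proof (rule bij_betwI[where g = "\<lambda>(P, Q). case_sum P Q"])
  show "(\<lambda>\<alpha>. (\<alpha> \<circ> Inl, \<alpha> \<circ> Inr)) \<in> (UNIV :: ('n + 'n \<Rightarrow> 'a) set) \<rightarrow> UNIV" by simp
  show "(\<lambda>(P, Q). case_sum P Q) \<in> UNIV \<rightarrow> (UNIV :: ('n + 'n \<Rightarrow> 'a) set)" by simp
  fix x :: "('n \<Rightarrow> 'a) \<times> ('n \<Rightarrow> 'a)"
  show "(\<lambda>\<alpha>. (\<alpha> \<circ> Inl, \<alpha> \<circ> Inr)) ((\<lambda>(P, Q). case_sum P Q) x) = x"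
    by (cases x) (simp add: o_def)
next
  fix \<alpha> :: "'n + 'n \<Rightarrow> 'a"
  show "(\<lambda>(P, Q). case_sum P Q) ((\<lambda>\<alpha>. (\<alpha> \<circ> Inl, \<alpha> \<circ> Inr)) \<alpha>) = \<alpha>"
    by (auto simp: fun_eq_iff split: sum.splits)
qed

lemma norm_lft_le:
  fixes z :: "complex^('n::finite + 'n)"
  assumes "\<And>i. norm (z$i) \<le> e"
  shows "norm (lft z) \<le> real CARD('n) * e" "norm (rgt z) \<le> real CARD('n) * e"
proof -
  have "norm (lft z) \<le> (\<Sum>i\<in>UNIV. norm (lft z $ i))"
    unfolding norm_vec_def by (rule L2_set_le_sum) simp
  also have "\<dots> \<le> (\<Sum>i\<in>(UNIV::'n set). e)"
    by (rule sum_mono) (simp add: lft_def assms)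
  finally show "norm (lft z) \<le> real CARD('n) * e" by simp
  have "norm (rgt z) \<le> (\<Sum>i\<in>UNIV. norm (rgt z $ i))"
    unfolding norm_vec_def by (rule L2_set_le_sum) simp
  also have "\<dots> \<le> (\<Sum>i\<in>(UNIV::'n set). e)"
    by (rule sum_mono) (simp add: rgt_def assms)
  finally show "norm (rgt z) \<le> real CARD('n) * e" by simp
qed

lemma taylor_transfer:
  fixes g :: "complex^'n::finite \<Rightarrow> complex^'n \<Rightarrow> complex"
  assumes cont: "continuous_on UNIV (\<lambda>z. g (lft z) (rgt z))"
    and hol: "\<And>w j. (\<lambda>\<zeta>. g (lft (upd w j \<zeta>)) (rgt (upd w j \<zeta>))) holomorphic_on UNIV"
  shows "((\<lambda>(P, Q). taylor_coeff g P Q * mono x P * mono y Q) has_sum g x y) UNIV"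
proof -
  define fv where "fv z = g (lft z) (rgt z)" for z
  define cP where "cP P Q = cc fv (case_sum P Q)" for P Q
  have E: "((\<lambda>\<alpha>. cc fv \<alpha> * mono z \<alpha>) has_sum fv z) UNIV" for z
    by (rule global_expansion) (use cont hol in \<open>simp_all add: fv_def\<close>)
  have EP: "((\<lambda>(P, Q). cP P Q * mono x P * mono y Q) has_sum g x y) UNIV" for x y
  proof -
    have "((\<lambda>p. (\<lambda>\<alpha>. cc fv \<alpha> * mono (join x y) \<alpha>) ((\<lambda>(P, Q). case_sum P Q) p)) has_sum fv (join x y)) UNIV"
      by (rule iffD2[OF has_sum_reindex_bij_betw[OF bij_split, of "\<lambda>\<alpha>. cc fv \<alpha> * mono (join x y) \<alpha>"] E[of "join x y"]])
    moreover have "(\<lambda>p. (\<lambda>\<alpha>. cc fv \<alpha> * mono (join x y) \<alpha>) ((\<lambda>(P, Q). case_sum P Q) p))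
        = (\<lambda>(P, Q). cP P Q * mono x P * mono y Q)"
      by (auto simp: fun_eq_iff cP_def mono_join o_def)
    ultimately show ?thesis by (simp add: fv_def)
  qed
  have "taylor_coeff g = cP"
    unfolding taylor_coeff_def
  proof (rule the_equality)
    show "\<exists>e>0. \<forall>x y. norm (x, y) < e \<longrightarrow>
        ((\<lambda>(P, Q). cP P Q * mono x P * mono y Q) has_sum g x y) UNIV"
      using EP by (intro exI[of _ 1]) auto
  next
    fix c' assume "\<exists>e>0. \<forall>x y. norm (x, y) < e \<longrightarrow>
        ((\<lambda>(P, Q). c' P Q * mono x P * mono y Q) has_sum g x y) UNIV"
    then obtain e where e: "e > 0" and he: "\<And>x y. norm (x, y) < e \<Longrightarrow>
        ((\<lambda>(P, Q). c' P Q * mono x P * mono y Q) has_sum g x y) UNIV" by blast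
    define e' where "e' = e / (2 * real CARD('n) + 1)"
    have e': "e' > 0" using e by (simp add: e'_def)
    define cv where "cv \<alpha> = c' (\<alpha> \<circ> Inl) (\<alpha> \<circ> Inr)" for \<alpha>
    have hv: "((\<lambda>\<alpha>. cv \<alpha> * mono z \<alpha>) has_sum fv z) UNIV" if z: "\<And>i. norm (z$i) < e'" for z
    proof -
      have "norm (lft z) \<le> real CARD('n) * e'" "norm (rgt z) \<le> real CARD('n) * e'"
        using norm_lft_le[of z e'] z less_imp_le by auto
      then have "norm (lft z, rgt z) \<le> 2 * real CARD('n) * e'"
        using norm_Pair_le[of "lft z" "rgt z"] by linarith
      also have "\<dots> < e"
        using e by (simp add: e'_def field_simps)
      finally have "((\<lambda>(P, Q). c' P Q * mono (lft z) P * mono (rgt z) Q) has_sum g (lft z) (rgt z)) UNIV"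
        by (rule he)
      then have "((\<lambda>\<alpha>. (\<lambda>(P, Q). c' P Q * mono (lft z) P * mono (rgt z) Q) (\<alpha> \<circ> Inl, \<alpha> \<circ> Inr))
          has_sum g (lft z) (rgt z)) UNIV"
        using has_sum_reindex_bij_betw[OF bij_split'] by blast
      moreover have "(\<lambda>\<alpha>. (\<lambda>(P, Q). c' P Q * mono (lft z) P * mono (rgt z) Q) (\<alpha> \<circ> Inl, \<alpha> \<circ> Inr))
          = (\<lambda>\<alpha>. cv \<alpha> * mono z \<alpha>)"
      proof
        fix \<alpha>
        have "mono z \<alpha> = mono (lft z) (\<alpha> \<circ> Inl) * mono (rgt z) (\<alpha> \<circ> Inr)"
          using mono_join[of "lft z" "rgt z" \<alpha>] by simp
        then show "(\<lambda>(P, Q). c' P Q * mono (lft z) P * mono (rgt z) Q) (\<alpha> \<circ> Inl, \<alpha> \<circ> Inr) = cv \<alpha> * mono z \<alpha>"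
          by (simp add: cv_def)
      qed
      ultimately show ?thesis by (simp add: fv_def)
    qed
    have "cv = cc fv"
      by (rule expansion_unique[OF e' zero_less_one hv E])
    then show "c' = cP"
    proof -
      assume cv: "cv = cc fv"
      show "c' = cP"
      proof (intro ext)
        fix P Q
        have "c' P Q = cv (case_sum P Q)" by (simp add: cv_def o_def)
        then show "c' P Q = cP P Q" using cv by (simp add: cP_def)
      qed
    qed
  qed
  then show ?thesis using EP by simp
qed

lemma dotc_upd1: "dotc (upd x k \<zeta>) y = dotc (upd x k 0) y + \<zeta> * y$k"
proof -
  have "dotc (upd x k \<zeta>) y = (\<Sum>i\<in>UNIV. upd x k 0 $ i * y$i + (if i = k then \<zeta> * y$k else 0))"
    unfolding dotc_def by (rule sum.cong) auto
  also have "\<dots> = dotc (upd x k 0) y + \<zeta> * y$k"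
    unfolding dotc_def by (simp add: sum.distrib)
  finally show ?thesis .
qed

lemma dotc_upd2: "dotc x (upd y k \<zeta>) = dotc x (upd y k 0) + x$k * \<zeta>"
proof -
  have "dotc x (upd y k \<zeta>) = (\<Sum>i\<in>UNIV. x$i * upd y k 0 $ i + (if i = k then x$k * \<zeta> else 0))"
    unfolding dotc_def by (rule sum.cong) auto
  also have "\<dots> = dotc x (upd y k 0) + x$k * \<zeta>"
    unfolding dotc_def by (simp add: sum.distrib)
  finally show ?thesis .
qed

lemma PhiP_line1: "PhiP (upd x k \<zeta>) y = PhiP (upd x k 0) y + smulH \<zeta> ((y$k, upd 0 k 1), (0, 0))"
  unfolding PhiP_def dotc_upd1[of x k \<zeta>] by (simp add: vec_eq_iff)

lemma PhiP_line2: "PhiP x (upd y k \<zeta>) = PhiP x (upd y k 0) + smulH \<zeta> ((x$k, 0), (0, upd 0 k 1))"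
  unfolding PhiP_def dotc_upd2[of x y k \<zeta>] by (simp add: vec_eq_iff mult.commute)

lemma PhiQ_line1: "PhiQ (upd x k \<zeta>) y = PhiQ (upd x k 0) y + smulH \<zeta> ((0, upd 0 k 1), (y$k, 0))"
  unfolding PhiQ_def dotc_upd1[of x k \<zeta>] by (simp add: vec_eq_iff)

lemma PhiQ_line2: "PhiQ x (upd y k \<zeta>) = PhiQ x (upd y k 0) + smulH \<zeta> ((0, 0), (x$k, upd 0 k 1))"
  unfolding PhiQ_def dotc_upd2[of x y k \<zeta>] by (simp add: vec_eq_iff mult.commute)

lemma continuous_on_PhiP [continuous_intros]:
  "continuous_on S f \<Longrightarrow> continuous_on S g \<Longrightarrow> continuous_on S (\<lambda>t. PhiP (f t) (g t))"
  unfolding PhiP_def dotc_def by (intro continuous_intros)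

lemma continuous_on_PhiQ [continuous_intros]:
  "continuous_on S f \<Longrightarrow> continuous_on S g \<Longrightarrow> continuous_on S (\<lambda>t. PhiQ (f t) (g t))"
  unfolding PhiQ_def dotc_def by (intro continuous_intros)

lemma gP_hyps:
  fixes F :: "'n::finite hpt \<Rightarrow> complex"
  assumes holo: "holo_hatD F"
  shows "continuous_on UNIV (\<lambda>z. F (PhiP (lft z) (rgt z)))"
    and "(\<lambda>\<zeta>. F (PhiP (lft (upd w j \<zeta>)) (rgt (upd w j \<zeta>)))) holomorphic_on UNIV"
proof -
  show "continuous_on UNIV (\<lambda>z. F (PhiP (lft z) (rgt z)))"
    by (rule continuous_on_compose2[OF holo_cont[OF holo]]) (auto intro!: continuous_intros simp: PhiP_in)
  show "(\<lambda>\<zeta>. F (PhiP (lft (upd w j \<zeta>)) (rgt (upd w j \<zeta>)))) holomorphic_on UNIV"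
  proof (cases j)
    case (Inl k)
    show ?thesis unfolding Inl lft_upd_l rgt_upd_l
      by (rule holo_affine[where L = "\<lambda>\<zeta>. PhiP (upd (lft w) k \<zeta>) (rgt w)", OF holo PhiP_line1 PhiP_in])
  next
    case (Inr k)
    show ?thesis unfolding Inr lft_upd_r rgt_upd_r
      by (rule holo_affine[where L = "\<lambda>\<zeta>. PhiP (lft w) (upd (rgt w) k \<zeta>)", OF holo PhiP_line2 PhiP_in])
  qed
qed

lemma gQ_hyps:
  fixes F :: "'n::finite hpt \<Rightarrow> complex"
  assumes holo: "holo_hatD F"
  shows "continuous_on UNIV (\<lambda>z. F (PhiQ (lft z) (rgt z)))"
    and "(\<lambda>\<zeta>. F (PhiQ (lft (upd w j \<zeta>)) (rgt (upd w j \<zeta>)))) holomorphic_on UNIV"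
proof -
  show "continuous_on UNIV (\<lambda>z. F (PhiQ (lft z) (rgt z)))"
    by (rule continuous_on_compose2[OF holo_cont[OF holo]]) (auto intro!: continuous_intros simp: PhiQ_in)
  show "(\<lambda>\<zeta>. F (PhiQ (lft (upd w j \<zeta>)) (rgt (upd w j \<zeta>)))) holomorphic_on UNIV"
  proof (cases j)
    case (Inl k)
    show ?thesis unfolding Inl lft_upd_l rgt_upd_l
      by (rule holo_affine[where L = "\<lambda>\<zeta>. PhiQ (upd (lft w) k \<zeta>) (rgt w)", OF holo PhiQ_line1 PhiQ_in])
  next
    case (Inr k)
    show ?thesis unfolding Inr lft_upd_r rgt_upd_r
      by (rule holo_affine[where L = "\<lambda>\<zeta>. PhiQ (lft w) (upd (rgt w) k \<zeta>)", OF holo PhiQ_line2 PhiQ_in])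
  qed
qed

lemma orth2:
  "integral {0..1} (\<lambda>\<tau>. (gam \<tau> ^ a * cnj (gam \<tau>) ^ b) * cnj (gam \<tau> ^ c * cnj (gam \<tau>) ^ d))
   = (if a + d = b + c then 1 else 0)"
proof -
  have "(gam \<tau> ^ a * cnj (gam \<tau>) ^ b) * cnj (gam \<tau> ^ c * cnj (gam \<tau>) ^ d)
      = gam \<tau> ^ (a + d) * cnj (gam \<tau>) ^ (b + c)" for \<tau>
    by (simp add: power_add ac_simps)
  then have "integral {0..1} (\<lambda>\<tau>. (gam \<tau> ^ a * cnj (gam \<tau>) ^ b) * cnj (gam \<tau> ^ c * cnj (gam \<tau>) ^ d))
      = integral {0..1} (\<lambda>\<tau>. gam \<tau> ^ (a + d) * cnj (gam \<tau>) ^ (b + c))"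
    by presburger
  also have "\<dots> = (if a + d = b + c then 1 else 0)" by (rule orth)
  finally show ?thesis .
qed

lemma continuous_on_sc2 [continuous_intros]:
  "continuous_on S c \<Longrightarrow> continuous_on S f \<Longrightarrow> continuous_on S (\<lambda>t. sc (c t) (f t))"
  unfolding sc_def by (intro continuous_intros)

lemma sc_one [simp]: "sc 1 x = x" by (simp add: vec_eq_iff)

lemma gam0 [simp]: "gam 0 = 1" by (simp add: gam_def)

lemma g_zero:
  fixes F :: "'n::finite hpt \<Rightarrow> complex"
  assumes holo: "holo_hatD F" and hyp: "\<forall>P Q. fprime F P Q = 0" and s0: "1 + dotc x y \<noteq> 0"
  shows "F (PhiP x y) = 0"
proof -
  define g where "g u v = F (PhiP u v)" for u v
  define h where "h u v = F (PhiQ u v)" for u v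
  have cg: "compP F = g" using compP_eq[OF holo] by (simp add: g_def fun_eq_iff)
  have ch: "compQ F = h" using compQ_eq[OF holo] by (simp add: h_def fun_eq_iff)
  define c where "c = taylor_coeff g"
  define c' where "c' = taylor_coeff h"
  have Eg: "((\<lambda>(P, Q). c P Q * mono u P * mono v Q) has_sum g u v) UNIV" for u v
    unfolding c_def by (rule taylor_transfer) (use gP_hyps[OF holo] in \<open>simp_all add: g_def\<close>)
  have Eh: "((\<lambda>(P, Q). c' P Q * mono u P * mono v Q) has_sum h u v) UNIV" for u v
    unfolding c'_def by (rule taylor_transfer) (use gQ_hyps[OF holo] in \<open>simp_all add: h_def\<close>)
  have c0: "c P Q = 0" if "msize Q \<le> msize P" for P Q
    using hyp[rule_format, of P Q] that unfolding fprime_def cg c_def by simp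
  have c0': "c' P Q = 0" if "msize P < msize Q" for P Q
    using hyp[rule_format, of P Q] that unfolding fprime_def ch c'_def by simp
  define s where "s = 1 + dotc x y"
  have s0': "s \<noteq> 0" using s0 by (simp add: s_def)
  define x1 where "x1 = sc (1/s) x"
  define y1 where "y1 = sc s y"
  define \<psi> where "\<psi> \<tau> = g (sc (gam \<tau>) x) (sc (cnj (gam \<tau>)) y)" for \<tau>
  have \<psi>Q: "\<psi> \<tau> = h (sc (gam \<tau>) x1) (sc (cnj (gam \<tau>)) y1)" for \<tau>
    unfolding \<psi>_def g_def h_def x1_def y1_def
    by (rule weight_identity[OF holo s_def s0' gam_cnj_mult])
  define ee where "ee \<tau> p = gam \<tau> ^ msize (fst p) * cnj (gam \<tau>) ^ msize (snd p)"
    for \<tau> and p :: "('n \<Rightarrow> nat) \<times> ('n \<Rightarrow> nat)"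
  define a where "a p = c (fst p) (snd p) * mono x (fst p) * mono y (snd p)" for p
  define b where "b p = c' (fst p) (snd p) * mono x1 (fst p) * mono y1 (snd p)" for p
  have nee: "norm (ee \<tau> p) = 1" for \<tau> p by (simp add: ee_def norm_mult norm_power)
  have hA: "((\<lambda>p. a p * ee \<tau> p) has_sum \<psi> \<tau>) UNIV" for \<tau>
  proof -
    have "((\<lambda>(P, Q). c P Q * mono (sc (gam \<tau>) x) P * mono (sc (cnj (gam \<tau>)) y) Q) has_sum \<psi> \<tau>) UNIV"
      unfolding \<psi>_def by (rule Eg)
    moreover have "(\<lambda>(P, Q). c P Q * mono (sc (gam \<tau>) x) P * mono (sc (cnj (gam \<tau>)) y) Q) = (\<lambda>p. a p * ee \<tau> p)"
      by (auto simp: fun_eq_iff a_def ee_def mono_sc ac_simps)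
    ultimately show ?thesis by simp
  qed
  have hB: "((\<lambda>p. b p * ee \<tau> p) has_sum \<psi> \<tau>) UNIV" for \<tau>
  proof -
    have "((\<lambda>(P, Q). c' P Q * mono (sc (gam \<tau>) x1) P * mono (sc (cnj (gam \<tau>)) y1) Q) has_sum \<psi> \<tau>) UNIV"
      unfolding \<psi>Q by (rule Eh)
    moreover have "(\<lambda>(P, Q). c' P Q * mono (sc (gam \<tau>) x1) P * mono (sc (cnj (gam \<tau>)) y1) Q) = (\<lambda>p. b p * ee \<tau> p)"
      by (auto simp: fun_eq_iff b_def ee_def mono_sc ac_simps)
    ultimately show ?thesis by simp
  qed
  have sa: "(\<lambda>p. norm (a p)) summable_on UNIV"
  proof -
    have "(\<lambda>(P, Q). c P Q * mono x P * mono y Q) = a" by (auto simp: fun_eq_iff a_def)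
    then have "(a has_sum g x y) UNIV" using Eg[of x y] by simp
    then have "a summable_on UNIV" unfolding summable_on_def by blast
    then show ?thesis by (rule summable_on_iff_abs_summable_on_complex[THEN iffD1])
  qed
  have sb: "(\<lambda>p. norm (b p)) summable_on UNIV"
  proof -
    have "(\<lambda>(P, Q). c' P Q * mono x1 P * mono y1 Q) = b" by (auto simp: fun_eq_iff b_def)
    then have "(b has_sum h x1 y1) UNIV" using Eh[of x1 y1] by simp
    then have "b summable_on UNIV" unfolding summable_on_def by blast
    then show ?thesis by (rule summable_on_iff_abs_summable_on_complex[THEN iffD1])
  qed
  have cont\<psi>: "continuous_on {0..1} \<psi>"
    unfolding \<psi>_def g_def
    by (rule continuous_on_compose2[OF holo_cont[OF holo]]) (auto intro!: continuous_intros simp: PhiP_in)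
  obtain K where K: "K > 0" "\<And>\<tau>. \<tau> \<in> {0..1} \<Longrightarrow> norm (\<psi> \<tau>) \<le> K"
  proof -
    have "compact (\<psi> ` {0..1})" by (rule compact_continuous_image[OF cont\<psi> compact_Icc])
    then have "bounded (\<psi> ` {0..1})" by (rule compact_imp_bounded)
    then show ?thesis using that unfolding bounded_pos by auto
  qed
  have cee: "continuous_on S (\<lambda>\<tau>. ee \<tau> p)" for S p unfolding ee_def by (intro continuous_intros)
  have inner: "integral {0..1} (\<lambda>\<tau>. \<psi> \<tau> * cnj (ee \<tau> p)) = 0" if bp: "b p \<noteq> 0" for p
  proof -
    have hs: "((\<lambda>q. integral {0..1} (\<lambda>\<tau>. a q * (ee \<tau> q * cnj (ee \<tau> p)))) has_sum
        integral {0..1} (\<lambda>\<tau>. \<psi> \<tau> * cnj (ee \<tau> p))) UNIV"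
    proof (rule integral_has_sum[where M = "\<lambda>q. norm (a q)"])
      fix q show "continuous_on {0..1} (\<lambda>\<tau>. a q * (ee \<tau> q * cnj (ee \<tau> p)))"
        by (intro continuous_intros cee)
    next
      fix q and \<tau> :: real show "norm (a q * (ee \<tau> q * cnj (ee \<tau> p))) \<le> norm (a q)"
        by (simp add: norm_mult nee)
    next
      show "(\<lambda>q. norm (a q)) summable_on UNIV" by (rule sa)
    next
      fix \<tau> :: real
      have "((\<lambda>q. a q * ee \<tau> q * cnj (ee \<tau> p)) has_sum \<psi> \<tau> * cnj (ee \<tau> p)) UNIV"
        by (rule has_sum_cmult_left[OF hA])
      then show "((\<lambda>q. a q * (ee \<tau> q * cnj (ee \<tau> p))) has_sum \<psi> \<tau> * cnj (ee \<tau> p)) UNIV"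
        by (simp only: mult.assoc)
    qed
    have z: "integral {0..1} (\<lambda>\<tau>. a q * (ee \<tau> q * cnj (ee \<tau> p))) = 0" for q
    proof (cases "a q = 0")
      case True then show ?thesis by simp
    next
      case False
      then have cq: "c (fst q) (snd q) \<noteq> 0" by (auto simp: a_def)
      then have lt1: "msize (fst q) < msize (snd q)" using c0 not_le by blast
      have cp: "c' (fst p) (snd p) \<noteq> 0" using bp by (auto simp: b_def)
      then have le2: "msize (snd p) \<le> msize (fst p)" using c0' not_le by blast
      have "integral {0..1} (\<lambda>\<tau>. ee \<tau> q * cnj (ee \<tau> p)) = 0"
        unfolding ee_def orth2 using lt1 le2 by simp
      then show ?thesis by (simp add: integral_cmult_c)
    qed
    have "((\<lambda>q::('n \<Rightarrow> nat) \<times> ('n \<Rightarrow> nat). 0) has_sum integral {0..1} (\<lambda>\<tau>. \<psi> \<tau> * cnj (ee \<tau> p))) UNIV"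
      using hs unfolding z .
    then show ?thesis using has_sum_unique[OF _ has_sum_0_simp] by blast
  qed
  have outer: "integral {0..1} (\<lambda>\<tau>. \<psi> \<tau> * cnj (\<psi> \<tau>)) = 0"
  proof -
    have hs: "((\<lambda>p. integral {0..1} (\<lambda>\<tau>. \<psi> \<tau> * (cnj (b p) * cnj (ee \<tau> p)))) has_sum
        integral {0..1} (\<lambda>\<tau>. \<psi> \<tau> * cnj (\<psi> \<tau>))) UNIV"
    proof (rule integral_has_sum[where M = "\<lambda>p. K * norm (b p)"])
      fix p show "continuous_on {0..1} (\<lambda>\<tau>. \<psi> \<tau> * (cnj (b p) * cnj (ee \<tau> p)))"
        by (intro continuous_intros cee cont\<psi>)
    next
      fix p and \<tau> :: real assume t: "\<tau> \<in> {0..1}"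
      have "norm (\<psi> \<tau> * (cnj (b p) * cnj (ee \<tau> p))) = norm (\<psi> \<tau>) * norm (b p)"
        by (simp add: norm_mult nee)
      also have "\<dots> \<le> K * norm (b p)" by (rule mult_right_mono[OF K(2)[OF t]]) simp
      finally show "norm (\<psi> \<tau> * (cnj (b p) * cnj (ee \<tau> p))) \<le> K * norm (b p)" .
    next
      show "(\<lambda>p. K * norm (b p)) summable_on UNIV" by (rule summable_on_cmult_right[OF sb])
    next
      fix \<tau> :: real
      have "((\<lambda>p. cnj (b p * ee \<tau> p)) has_sum cnj (\<psi> \<tau>)) UNIV"
        by (rule has_sum_cnj_iff[THEN iffD2, OF hB])
      then have "((\<lambda>p. \<psi> \<tau> * cnj (b p * ee \<tau> p)) has_sum \<psi> \<tau> * cnj (\<psi> \<tau>)) UNIV"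
        by (rule has_sum_cmult_right)
      then show "((\<lambda>p. \<psi> \<tau> * (cnj (b p) * cnj (ee \<tau> p))) has_sum \<psi> \<tau> * cnj (\<psi> \<tau>)) UNIV"
        by (simp only: complex_cnj_mult)
    qed
    have z: "integral {0..1} (\<lambda>\<tau>. \<psi> \<tau> * (cnj (b p) * cnj (ee \<tau> p))) = 0" for p
    proof (cases "b p = 0")
      case True then show ?thesis by simp
    next
      case False
      have "(\<lambda>\<tau>. \<psi> \<tau> * (cnj (b p) * cnj (ee \<tau> p))) = (\<lambda>\<tau>. cnj (b p) * (\<psi> \<tau> * cnj (ee \<tau> p)))"
        by (simp add: fun_eq_iff ac_simps)
      then have "integral {0..1} (\<lambda>\<tau>. \<psi> \<tau> * (cnj (b p) * cnj (ee \<tau> p)))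
          = cnj (b p) * integral {0..1} (\<lambda>\<tau>. \<psi> \<tau> * cnj (ee \<tau> p))"
        by (simp only: integral_cmult_c)
      also have "\<dots> = 0" using inner[OF False] by simp
      finally show ?thesis .
    qed
    have "((\<lambda>p::('n \<Rightarrow> nat) \<times> ('n \<Rightarrow> nat). 0) has_sum integral {0..1} (\<lambda>\<tau>. \<psi> \<tau> * cnj (\<psi> \<tau>))) UNIV"
      using hs unfolding z .
    then show ?thesis using has_sum_unique[OF _ has_sum_0_simp] by blast
  qed
  have int: "(\<lambda>\<tau>. \<psi> \<tau> * cnj (\<psi> \<tau>)) integrable_on {0..1}"
    by (rule integrable_continuous_real) (intro continuous_intros cont\<psi>)
  have "((\<lambda>\<tau>. \<psi> \<tau> * cnj (\<psi> \<tau>)) has_integral 0) {0..1}"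
    using integrable_integral[OF int] unfolding outer .
  then have "((\<lambda>\<tau>. Re (\<psi> \<tau> * cnj (\<psi> \<tau>))) has_integral Re 0) {0..1}"
    by (rule has_integral_Re)
  moreover have "Re (\<psi> \<tau> * cnj (\<psi> \<tau>)) = (cmod (\<psi> \<tau>))\<^sup>2" for \<tau>
    using complex_norm_square[of "\<psi> \<tau>"] by (metis Re_complex_of_real)
  ultimately have hi: "((\<lambda>\<tau>. (cmod (\<psi> \<tau>))\<^sup>2) has_integral 0) (cbox 0 1)" by simp
  have "(cmod (\<psi> 0))\<^sup>2 = 0"
  proof (rule has_integral_0_cbox_imp_0[OF _ _ hi])
    show "continuous_on (cbox 0 1) (\<lambda>\<tau>. (cmod (\<psi> \<tau>))\<^sup>2)"
      using cont\<psi> by (auto intro!: continuous_intros)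
    show "\<And>x. x \<in> box 0 1 \<Longrightarrow> 0 \<le> (cmod (\<psi> x))\<^sup>2" by simp
    show "box 0 (1::real) \<noteq> {}" by simp
    show "(0::real) \<in> cbox 0 1" by simp
  qed
  then have "\<psi> 0 = 0" by simp
  then show ?thesis by (simp add: \<psi>_def g_def)
qed

theorem lemma3p15:
  fixes F :: "'n::finite hpt \<Rightarrow> complex" and a :: "'n cpt \<Rightarrow> complex"
  assumes "holo_hatD F"
    and "\<forall>r\<in>Zset. a r = F (DeltaD r)"
    and "\<forall>P Q. fprime F P Q = 0"
  shows "\<forall>r\<in>Zset. a r = 0"
proof
  fix r :: "'n cpt" assume r: "r \<in> Zset"
  obtain r0 rr where R: "r = (r0, rr)" by (cases r)
  from r have z: "(\<Sum>i\<in>UNIV. (cmod (rr$i))\<^sup>2) - (cmod r0)\<^sup>2 = -1" by (simp add: Zset_def R)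
  define w where "w = DeltaD r"
  have W: "w = ((r0, rr), (cnj r0, \<chi> i. cnj (rr$i)))" by (simp add: w_def DeltaD_def R)
  have nn: "(cmod r0)\<^sup>2 = 1 + (\<Sum>i\<in>UNIV. (cmod (rr$i))\<^sup>2)" using z by simp
  have e1: "r0 * cnj r0 = 1 + (\<Sum>i\<in>UNIV. rr$i * cnj (rr$i))"
  proof -
    have "r0 * cnj r0 = of_real ((cmod r0)\<^sup>2)" by (rule complex_norm_square[symmetric])
    also have "\<dots> = of_real (1 + (\<Sum>i\<in>UNIV. (cmod (rr$i))\<^sup>2))" by (simp only: nn)
    also have "\<dots> = 1 + (\<Sum>i\<in>UNIV. rr$i * cnj (rr$i))"
      by (simp only: of_real_add of_real_1 of_real_sum complex_norm_square)
    finally show ?thesis .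
  qed
  have wZ: "w \<in> hatZ" unfolding W hatZ_eq using e1 by simp
  have r0: "r0 \<noteq> 0"
  proof
    assume "r0 = 0"
    then have "(\<Sum>i\<in>UNIV. (cmod (rr$i))\<^sup>2) = -1" using z by simp
    moreover have "(\<Sum>i\<in>UNIV. (cmod (rr$i))\<^sup>2) \<ge> 0" by (rule sum_nonneg) simp
    ultimately show False by simp
  qed
  have q0: "fst (snd w) \<noteq> 0" using r0 by (simp add: W)
  have f1: "F w = F (PhiP (fst (chartP w)) (snd (chartP w)))" by (rule F_via_P(1)[OF assms(1) wZ q0])
  have f2: "1 + dotc (fst (chartP w)) (snd (chartP w)) = fst (fst w) * fst (snd w)"
    by (rule F_via_P(2)[OF assms(1) wZ q0])
  have "fst (fst w) * fst (snd w) \<noteq> 0" using r0 by (simp add: W)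
  then have "1 + dotc (fst (chartP w)) (snd (chartP w)) \<noteq> 0" unfolding f2 .
  then have "F (PhiP (fst (chartP w)) (snd (chartP w))) = 0" by (rule g_zero[OF assms(1) assms(3)])
  then have "F w = 0" unfolding f1 .
  then show "a r = 0" using assms(2) r by (simp add: w_def)
qed

end
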